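(* For all $\lambda_1,\lambda_2\in[0,1]$ and irrational $\Phi\in\mathbb T$, $\Sigma_{\lambda_1,\lambda_2,\Phi}=\Sigma_{\lambda_2,\lambda_1,\Phi}$.
   Context: Let $\mathbb T=\mathbb R/\mathbb Z$ and $\partial\mathbb D=\{z\in\mathbb C:|z|=1\}$. Let $\mathscr H_1=\ell^2(\mathbb Z)\otimes\mathbb C^2$ with orthonormal basis $\delta_n^{s}=\delta_n\otimes e_s$ ($n\in\mathbb Z$, $s\in\{+,-\}$), $e_+=(1,0)^\top$, $e_-=(0,1)^\top$; write $\psi_n^s=\langle\delta_n^s,\psi\rangle$ and $\psi_n=(\psi_n^+,\psi_n^-)^\top$. For $\lambda\in[0,1]$ put $\lambda'=\sqrt{1-\lambda^2}$ and let $S_\lambda$ be the unitary operator with $S_\lambda\delta_n^\pm=\lambda\delta_{n\pm1}^\pm\pm\lambda'\delta_n^\mp$. For $\lambda_2\in[0,1]$, $\Phi,\theta\in\mathbb T$, $n\in\mathbb Z$ let $$Q_n=Q_{\lambda_2,\Phi,\theta,n}=\begin{bmatrix}\lambda_2\cos(2\pi(n\Phi+\theta))+i\lambda_2' & -\lambda_2\sin(2\pi(n\Phi+\theta))\\ \lambda_2\sin(2\pi(n\Phi+\theta)) & \lambda_2\cos(2\pi(n\Phi+\theta))-i\lambda_2'\end{bmatrix},$$ and let $Q_{\lambda_2,\Phi,\theta}$ act by $(Q\psi)_n=Q_n\psi_n$. The unitary almost-Mathieu operator is $W_{\lambda_1,\lambda_2,\Phi,\theta}=S_{\lambda_1}Q_{\lambda_2,\Phi,\theta}$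 on $\mathscr H_1$, for $\lambda_1,\lambda_2\in[0,1]$. For irrational $\Phi$ its spectrum does not depend on $\theta$ and is denoted $\Sigma_{\lambda_1,\lambda_2,\Phi}\subset\partial\mathbb D$. *)

theory Defs
  imports "HOL-Analysis.Analysis"
begin

text \<open>States in \<open>\<ell>\<^sup>2(\<int>) \<otimes> \<complex>\<^sup>2\<close>: \<open>\<psi> n True = \<psi>\<^sub>n\<^sup>+\<close>, \<open>\<psi> n False = \<psi>\<^sub>n\<^sup>-\<close>.\<close>
type_synonym state = "int \<Rightarrow> bool \<Rightarrow> complex"

definition l2 :: "state set" where
  "l2 = {\<psi>. (\<lambda>(n, s). (norm (\<psi> n s))\<^sup>2) summable_on (UNIV :: (int \<times> bool) set)}"

definition l2norm :: "state \<Rightarrow> real" where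
  "l2norm \<psi> = sqrt (infsum (\<lambda>(n, s). (norm (\<psi> n s))\<^sup>2) (UNIV :: (int \<times> bool) set))"

definition cpl :: "real \<Rightarrow> real" where
  "cpl lam = sqrt (1 - lam\<^sup>2)"

text \<open>Shift: \<open>S\<^sub>\<lambda> \<delta>\<^sub>n\<^sup>\<plusminus> = \<lambda> \<delta>\<^sub>n\<^sub>\<plusminus>\<^sub>1\<^sup>\<plusminus> \<plusminus> \<lambda>' \<delta>\<^sub>n\<^sup>\<mp>\<close>, written in coordinates.\<close>
definition Sop :: "real \<Rightarrow> state \<Rightarrow> state" where
  "Sop lam \<psi> = (\<lambda>n s. if s
      then complex_of_real lam * \<psi> (n - 1) True - complex_of_real (cpl lam) * \<psi> n False
      else complex_of_real lam * \<psi> (n + 1) False + complex_of_real (cpl lam) * \<psi> n True)"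

definition Qop :: "real \<Rightarrow> real \<Rightarrow> real \<Rightarrow> state \<Rightarrow> state" where
  "Qop lam \<Phi> \<theta> \<psi> = (\<lambda>n s.
     let c = complex_of_real (lam * cos (2 * pi * (of_int n * \<Phi> + \<theta>)));
         d = complex_of_real (lam * sin (2 * pi * (of_int n * \<Phi> + \<theta>)));
         l' = complex_of_real (cpl lam)
     in if s then (c + \<i> * l') * \<psi> n True - d * \<psi> n False
        else d * \<psi> n True + (c - \<i> * l') * \<psi> n False)"

definition UAMO :: "real \<Rightarrow> real \<Rightarrow> real \<Rightarrow> real \<Rightarrow> state \<Rightarrow> state" where
  "UAMO lam1 lam2 \<Phi> \<theta> = Sop lam1 \<circ> Qop lam2 \<Phi> \<theta>"

definition op_spectrum :: "(state \<Rightarrow> state) \<Rightarrow> complex set" where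
  "op_spectrum T = {z. \<not> (\<exists>R. (\<forall>\<psi>\<in>l2. R \<psi> \<in> l2
        \<and> (\<lambda>n s. T (R \<psi>) n s - z * R \<psi> n s) = \<psi>
        \<and> R (\<lambda>n s. T \<psi> n s - z * \<psi> n s) = \<psi>)
      \<and> (\<exists>C. \<forall>\<psi>\<in>l2. l2norm (R \<psi>) \<le> C * l2norm \<psi>))}"

text \<open>\<open>\<Sigma>\<^sub>\<lambda>\<^sub>1\<^sub>,\<^sub>\<lambda>\<^sub>2\<^sub>,\<^sub>\<Phi>\<close>: for irrational \<open>\<Phi>\<close> the spectrum does not depend on \<open>\<theta>\<close>, so it equals
  the union over all phases.\<close>
definition Sigma_UAMO :: "real \<Rightarrow> real \<Rightarrow> real \<Rightarrow> complex set" where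
  "Sigma_UAMO lam1 lam2 \<Phi> = (\<Union>\<theta>. op_spectrum (UAMO lam1 lam2 \<Phi> \<theta>))"

end

theory Submission
  imports Defs
begin

definition wn :: "int \<Rightarrow> state \<Rightarrow> real" where
  "wn N \<phi> = L2_set (\<lambda>(n, s). cmod (\<phi> n s)) ({-N..N} \<times> UNIV)"

definition sq :: "state \<Rightarrow> int \<Rightarrow> real" where
  "sq \<phi> n = (cmod (\<phi> n True))\<^sup>2 + (cmod (\<phi> n False))\<^sup>2"

lemma sum_bool_prod: "(\<Sum>p\<in>A \<times> (UNIV::bool set). f p) = (\<Sum>n\<in>A. f (n, True) + f (n, False))"
proof -
  have "(\<Sum>p\<in>A \<times> (UNIV::bool set). f p) = (\<Sum>n\<in>A. \<Sum>s\<in>UNIV. f (n, s))"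
    by (simp add: sum.cartesian_product)
  also have "\<dots> = (\<Sum>n\<in>A. f (n, True) + f (n, False))"
    by (simp add: UNIV_bool add.commute)
  finally show ?thesis .
qed

lemma wn_sq: "(wn N \<phi>)\<^sup>2 = (\<Sum>n\<in>{-N..N}. sq \<phi> n)"
  unfolding wn_def L2_set_def
  by (subst real_sqrt_pow2) (auto intro!: sum_nonneg simp: sum_bool_prod sq_def)

lemma wn_def2: "wn N \<phi> = sqrt (\<Sum>n\<in>{-N..N}. sq \<phi> n)"
  by (metis L2_set_nonneg real_sqrt_unique wn_def wn_sq)

lemma wn_nonneg[simp]: "0 \<le> wn N \<phi>"
  by (simp add: wn_def)

lemma sq_nonneg[simp]: "0 \<le> sq \<phi> n"
  by (simp add: sq_def)

lemma wn_mono: "N \<le> M \<Longrightarrow> wn N \<phi> \<le> wn M \<phi>"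
  unfolding wn_def2
  by (auto intro!: sum_mono2)

lemma wn_add: "wn N (\<lambda>n s. \<phi> n s + \<psi> n s) \<le> wn N \<phi> + wn N \<psi>"
proof -
  have "wn N (\<lambda>n s. \<phi> n s + \<psi> n s) \<le> L2_set (\<lambda>p. (\<lambda>(n, s). cmod (\<phi> n s)) p + (\<lambda>(n, s). cmod (\<psi> n s)) p) ({-N..N} \<times> UNIV)"
    unfolding wn_def by (rule L2_set_mono) (auto simp: norm_triangle_ineq)
  also have "\<dots> \<le> wn N \<phi> + wn N \<psi>" unfolding wn_def by (rule L2_set_triangle_ineq)
  finally show ?thesis .
qed

lemma wn_scale: "wn N (\<lambda>n s. c * \<phi> n s) = cmod c * wn N \<phi>"
  unfolding wn_def by (subst L2_set_right_distrib) (auto simp: norm_mult case_prod_unfold)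

lemma wn_uminus: "wn N (\<lambda>n s. - \<phi> n s) = wn N \<phi>"
  unfolding wn_def by simp

lemma wn_diff: "wn N (\<lambda>n s. \<phi> n s - \<psi> n s) \<le> wn N \<phi> + wn N \<psi>"
  using wn_add[of N \<phi> "\<lambda>n s. - \<psi> n s"] wn_uminus[of N \<psi>] by simp

lemma wn_point: "\<bar>n\<bar> \<le> N \<Longrightarrow> cmod (\<phi> n s) \<le> wn N \<phi>"
  unfolding wn_def
  using member_le_L2_set[of "{-N..N} \<times> UNIV" "(n,s)" "\<lambda>(n, s). cmod (\<phi> n s)"] by (auto simp: abs_le_iff)

lemma sq_le_ws: "\<bar>n\<bar> \<le> N \<Longrightarrow> sq \<phi> n \<le> (\<Sum>n\<in>{-N..N}. sq \<phi> n)"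
  by (rule member_le_sum) auto

lemma fin_sub_window:
  assumes "finite (F :: (int \<times> bool) set)"
  shows "\<exists>N. F \<subseteq> {-N..N} \<times> UNIV"
proof -
  have "finite (fst ` F)" using assms by simp
  then have "bdd_above (abs ` fst ` F)" by (simp add: bdd_above_finite)
  then obtain N where N: "\<And>x. x \<in> F \<Longrightarrow> \<bar>fst x\<bar> \<le> N"
    unfolding bdd_above_def by auto
  show ?thesis
  proof (intro exI[of _ N] subsetI)
    fix x assume "x \<in> F"
    from N[OF this] show "x \<in> {-N..N} \<times> UNIV" by (cases x) auto
  qed
qed

lemma ws_as_sum: "(\<Sum>n\<in>{-N..N}. sq \<phi> n) = sum (\<lambda>(n, s). (cmod (\<phi> n s))\<^sup>2) ({-N..N} \<times> UNIV)"
  by (simp add: sum_bool_prod sq_def)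

lemma l2_wn_le:
  assumes "\<phi> \<in> l2" shows "wn N \<phi> \<le> l2norm \<phi>"
proof -
  have "sum (\<lambda>(n, s). (cmod (\<phi> n s))\<^sup>2) ({-N..N} \<times> UNIV) \<le> infsum (\<lambda>(n, s). (cmod (\<phi> n s))\<^sup>2) UNIV"
    using assms unfolding l2_def by (intro finite_sum_le_infsum) auto
  then show ?thesis unfolding wn_def2 l2norm_def ws_as_sum by simp
qed

lemma l2I:
  assumes "\<And>N. wn N \<phi> \<le> M"
  shows "\<phi> \<in> l2" "l2norm \<phi> \<le> M"
proof -
  let ?f = "\<lambda>(n, s). (cmod (\<phi> n s))\<^sup>2"
  have M0: "0 \<le> M" using assms[of 0] wn_nonneg[of 0 \<phi>] by linarith
  have b: "sum ?f F \<le> M\<^sup>2" if FF: "finite F" for F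
  proof -
    obtain N where "F \<subseteq> {-N..N} \<times> UNIV" using fin_sub_window[OF FF] by blast
    then have "sum ?f F \<le> sum ?f ({-N..N} \<times> UNIV)"
      by (intro sum_mono2) auto
    also have "\<dots> = (wn N \<phi>)\<^sup>2" by (simp add: wn_sq ws_as_sum)
    also have "\<dots> \<le> M\<^sup>2" using assms[of N] by (simp add: power_mono)
    finally show ?thesis .
  qed
  have bdd: "bdd_above (sum ?f ` {F. F \<subseteq> UNIV \<and> finite F})"
    using b by (auto simp: bdd_above_def)
  have sm: "?f summable_on UNIV"
    by (rule nonneg_bdd_above_summable_on[OF _ bdd]) auto
  then show "\<phi> \<in> l2" by (simp add: l2_def)
  have "infsum ?f UNIV = (SUP F\<in>{F. finite F \<and> F \<subseteq> UNIV}. sum ?f F)"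
    by (rule infsum_nonneg_is_SUPREMUM_real[OF sm]) auto
  also have "\<dots> \<le> M\<^sup>2"
    by (rule cSUP_least) (auto intro: b)
  finally show "l2norm \<phi> \<le> M" unfolding l2norm_def using M0
    using real_le_lsqrt real_sqrt_le_mono by (metis M0 real_sqrt_abs abs_of_nonneg power2_eq_square real_sqrt_mult_self)
qed

lemma l2_approx:
  assumes "\<phi> \<in> l2" "0 < e"
  shows "\<exists>N. l2norm \<phi> - e < wn N \<phi>"
proof (cases "l2norm \<phi> - e < 0")
  case True then show ?thesis by (intro exI[of _ 0]) (metis le_less_trans not_le wn_nonneg)
next
  case False
  let ?f = "\<lambda>(n, s). (cmod (\<phi> n s))\<^sup>2"
  have sm: "?f summable_on UNIV" using assms by (simp add: l2_def)
  have I: "infsum ?f UNIV = (l2norm \<phi>)\<^sup>2"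
    unfolding l2norm_def by (subst real_sqrt_pow2) (auto intro!: infsum_nonneg)
  have lt: "(l2norm \<phi> - e)\<^sup>2 < (l2norm \<phi>)\<^sup>2"
    using False assms(2) by (simp add: power_strict_mono)
  have "infsum ?f UNIV = (SUP F\<in>{F. finite F \<and> F \<subseteq> UNIV}. sum ?f F)"
    by (rule infsum_nonneg_is_SUPREMUM_real[OF sm]) auto
  with lt I have "(l2norm \<phi> - e)\<^sup>2 < (SUP F\<in>{F. finite F \<and> F \<subseteq> UNIV}. sum ?f F)" by simp
  moreover have "bdd_above (sum ?f ` {F. finite F \<and> F \<subseteq> UNIV})"
    using sm by (auto simp: bdd_above_def intro!: exI[of _ "infsum ?f UNIV"] finite_sum_le_infsum)
  ultimately obtain F where F: "finite F" "(l2norm \<phi> - e)\<^sup>2 < sum ?f F"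
    by (subst (asm) less_cSUP_iff) auto
  obtain N where "F \<subseteq> {-N..N} \<times> UNIV" using fin_sub_window[OF F(1)] by blast
  then have "sum ?f F \<le> sum ?f ({-N..N} \<times> UNIV)"
    by (intro sum_mono2) auto
  also have "\<dots> = (wn N \<phi>)\<^sup>2" by (simp add: wn_sq ws_as_sum)
  finally have "(l2norm \<phi> - e)\<^sup>2 < (wn N \<phi>)\<^sup>2" using F(2) by linarith
  then have "l2norm \<phi> - e < wn N \<phi>"
    using False by (meson power_less_imp_less_base wn_nonneg)
  then show ?thesis by blast
qed

definition supp_in :: "int \<Rightarrow> state \<Rightarrow> bool" where
  "supp_in K \<phi> \<longleftrightarrow> (\<forall>n s. K < \<bar>n\<bar> \<longrightarrow> \<phi> n s = 0)"

definition trunc :: "int \<Rightarrow> state \<Rightarrow> state" where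
  "trunc K \<phi> = (\<lambda>n s. if \<bar>n\<bar> \<le> K then \<phi> n s else 0)"

lemma sum_supp:
  fixes f :: "int \<Rightarrow> 'a::comm_monoid_add"
  assumes "\<And>n. K < \<bar>n\<bar> \<Longrightarrow> f n = 0" "{-K..K} \<subseteq> A" "finite A"
  shows "sum f A = (\<Sum>n\<in>{-K..K}. f n)"
  using assms by (intro sum.mono_neutral_right) (auto simp: abs_le_iff not_le)

lemma sum_shift:
  fixes f :: "int \<Rightarrow> 'a::comm_monoid_add"
  assumes "\<And>n. K < \<bar>n\<bar> \<Longrightarrow> f n = 0" "K + \<bar>p\<bar> \<le> N"
  shows "(\<Sum>n\<in>{-N..N}. f (n + p)) = (\<Sum>n\<in>{-N..N}. f n)"
proof -
  have "(\<Sum>n\<in>{-N..N}. f (n + p)) = sum f ((\<lambda>n. n + p) ` {-N..N})"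
    by (subst sum.reindex) (auto simp: inj_on_def)
  also have "\<dots> = (\<Sum>n\<in>{-K..K}. f n)"
  proof (rule sum_supp[OF assms(1)])
    show "{-K..K} \<subseteq> (\<lambda>n. n + p) ` {-N..N}"
    proof
      fix x assume "x \<in> {-K..K}"
      then have "x - p \<in> {-N..N}" using assms(2) by auto
      then show "x \<in> (\<lambda>n. n + p) ` {-N..N}" by (intro image_eqI[of _ _ "x - p"]) auto
    qed
  qed auto
  also have "\<dots> = (\<Sum>n\<in>{-N..N}. f n)"
    by (rule sum_supp[OF assms(1), symmetric]) (use assms(2) in auto)
  finally show ?thesis .
qed

lemma ws_supp: "supp_in K \<phi> \<Longrightarrow> K \<le> N \<Longrightarrow> (\<Sum>n\<in>{-N..N}. sq \<phi> n) = (\<Sum>n\<in>{-K..K}. sq \<phi> n)"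
  by (rule sum_supp) (simp_all add: supp_in_def sq_def)

lemma wn_supp: "supp_in K \<phi> \<Longrightarrow> K \<le> N \<Longrightarrow> wn N \<phi> = wn K \<phi>"
  unfolding wn_def2 by (subst ws_supp[of K \<phi> N]) auto

lemma supp_l2: assumes "supp_in K \<phi>" shows "\<phi> \<in> l2" "l2norm \<phi> = wn K \<phi>"
proof -
  have b: "wn N \<phi> \<le> wn K \<phi>" for N
    using wn_mono[of N K \<phi>] wn_supp[OF assms, of N] by (cases "N \<le> K") auto
  show "\<phi> \<in> l2" using l2I(1)[OF b] .
  show "l2norm \<phi> = wn K \<phi>" using l2I(2)[OF b] l2_wn_le[OF \<open>\<phi> \<in> l2\<close>, of K] by linarith
qed

lemma wn_cong: "(\<And>n s. \<bar>n\<bar> \<le> N \<Longrightarrow> \<phi> n s = \<psi> n s) \<Longrightarrow> wn N \<phi> = wn N \<psi>"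
  unfolding wn_def2 sq_def by (intro arg_cong[where f=sqrt] sum.cong) (auto simp: abs_le_iff)

lemma supp_trunc: "supp_in K (trunc K \<phi>)"
  by (simp add: supp_in_def trunc_def)

lemma wn_trunc: "wn K (trunc K \<phi>) = wn K \<phi>"
  by (rule wn_cong) (simp add: trunc_def)

lemma l2_norm_point: "\<phi> \<in> l2 \<Longrightarrow> cmod (\<phi> n s) \<le> l2norm \<phi>"
  using wn_point[of n "\<bar>n\<bar>" \<phi> s] l2_wn_le[of \<phi> "\<bar>n\<bar>"] by simp

lemma l2norm_nonneg[simp]: "0 \<le> l2norm \<phi>"
  unfolding l2norm_def by (rule real_sqrt_ge_zero, rule infsum_nonneg) (simp add: case_prod_beta)

lemma l2_add: assumes "\<phi> \<in> l2" "\<psi> \<in> l2"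
  shows "(\<lambda>n s. \<phi> n s + \<psi> n s) \<in> l2" "l2norm (\<lambda>n s. \<phi> n s + \<psi> n s) \<le> l2norm \<phi> + l2norm \<psi>"
proof -
  have "wn N (\<lambda>n s. \<phi> n s + \<psi> n s) \<le> l2norm \<phi> + l2norm \<psi>" for N
    using wn_add[of N \<phi> \<psi>] l2_wn_le[OF assms(1), of N] l2_wn_le[OF assms(2), of N] by linarith
  then show "(\<lambda>n s. \<phi> n s + \<psi> n s) \<in> l2" "l2norm (\<lambda>n s. \<phi> n s + \<psi> n s) \<le> l2norm \<phi> + l2norm \<psi>"
    using l2I by blast+
qed

lemma l2_scale: assumes "\<phi> \<in> l2"
  shows "(\<lambda>n s. c * \<phi> n s) \<in> l2" "l2norm (\<lambda>n s. c * \<phi> n s) = cmod c * l2norm \<phi>"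
proof -
  have "wn N (\<lambda>n s. c * \<phi> n s) \<le> cmod c * l2norm \<phi>" for N
    using l2_wn_le[OF assms, of N] by (simp add: wn_scale mult_left_mono)
  then have l: "(\<lambda>n s. c * \<phi> n s) \<in> l2" and le: "l2norm (\<lambda>n s. c * \<phi> n s) \<le> cmod c * l2norm \<phi>"
    using l2I by blast+
  show "(\<lambda>n s. c * \<phi> n s) \<in> l2" by (rule l)
  show "l2norm (\<lambda>n s. c * \<phi> n s) = cmod c * l2norm \<phi>"
  proof (cases "c = 0")
    case True then show ?thesis using le by (metis l2norm_nonneg order_antisym mult_zero_left norm_zero)
  next
    case False
    have "wn N \<phi> \<le> l2norm (\<lambda>n s. c * \<phi> n s) / cmod c" for N
      using l2_wn_le[OF l, of N] False by (simp add: wn_scale field_simps)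
    then have "l2norm \<phi> \<le> l2norm (\<lambda>n s. c * \<phi> n s) / cmod c" using l2I by blast
    then show ?thesis using le False by (simp add: field_simps)
  qed
qed

lemma l2_uminus: "\<phi> \<in> l2 \<Longrightarrow> (\<lambda>n s. - \<phi> n s) \<in> l2 \<and> l2norm (\<lambda>n s. - \<phi> n s) = l2norm \<phi>"
  using l2_scale[of \<phi> "-1"] by simp

lemma l2_diff: assumes "\<phi> \<in> l2" "\<psi> \<in> l2"
  shows "(\<lambda>n s. \<phi> n s - \<psi> n s) \<in> l2" "l2norm (\<lambda>n s. \<phi> n s - \<psi> n s) \<le> l2norm \<phi> + l2norm \<psi>"
  using l2_add[OF assms(1) l2_uminus[OF assms(2), THEN conjunct1]] l2_uminus[OF assms(2)] by simp_all

lemma l2_zero: "(\<lambda>n s. 0) \<in> l2 \<and> l2norm (\<lambda>n s. 0) = 0"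
  using supp_l2[of 0 "\<lambda>n s. 0"] by (simp add: supp_in_def wn_def L2_set_0')

lemma l2norm_eq0: "\<phi> \<in> l2 \<Longrightarrow> l2norm \<phi> \<le> 0 \<Longrightarrow> \<phi> = (\<lambda>n s. 0)"
proof (intro ext)
  fix n s assume "\<phi> \<in> l2" "l2norm \<phi> \<le> 0"
  then have "cmod (\<phi> n s) \<le> 0" using l2_norm_point[of \<phi> n s] by linarith
  then show "\<phi> n s = 0" by simp
qed

lemma sum_window_restrict:
  fixes M L :: int
  assumes "M \<le> L"
  shows "(\<Sum>n\<in>{-M..M}. g n) = (\<Sum>n\<in>{-L..L}. if n \<in> {-M..M} then g n else (0::real))"
proof -
  have "(\<Sum>n\<in>{-L..L}. if n \<in> {-M..M} then g n else 0) = sum g ({-L..L} \<inter> {-M..M})"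
    by (rule sum.inter_restrict[symmetric]) (rule finite_atLeastAtMost_int)
  also have "{-L..L} \<inter> {-M..M} = {-M..M}" using assms by auto
  finally show ?thesis by simp
qed

lemma wn_trunc_diff:
  "(wn M (\<lambda>n s. \<phi> n s - trunc K \<phi> n s))\<^sup>2 + (wn K \<phi>)\<^sup>2 \<le> (wn (max M K) \<phi>)\<^sup>2"
proof -
  let ?L = "max M K"
  let ?g = "sq (\<lambda>n s. \<phi> n s - trunc K \<phi> n s)"
  have g: "?g n = (if \<bar>n\<bar> \<le> K then 0 else sq \<phi> n)" for n
    by (simp add: sq_def trunc_def)
  have "(wn M (\<lambda>n s. \<phi> n s - trunc K \<phi> n s))\<^sup>2 + (wn K \<phi>)\<^sup>2
     = (\<Sum>n\<in>{-?L..?L}. (if n \<in> {-M..M} then ?g n else 0) + (if n \<in> {-K..K} then sq \<phi> n else 0))"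
    unfolding wn_sq sum.distrib
    by (subst sum_window_restrict[of M ?L], simp, subst sum_window_restrict[of K ?L], simp_all)
  also have "\<dots> \<le> (\<Sum>n\<in>{-?L..?L}. sq \<phi> n)"
    by (intro sum_mono) (auto simp: g abs_le_iff)
  finally show ?thesis by (simp add: wn_sq)
qed

lemma l2_trunc_approx:
  assumes "\<phi> \<in> l2" "0 < e"
  shows "\<exists>K\<ge>0. l2norm (\<lambda>n s. \<phi> n s - trunc K \<phi> n s) \<le> e"
proof -
  define L where "L = l2norm \<phi>"
  have L0: "0 \<le> L" unfolding L_def by (rule l2norm_nonneg)
  define d where "d = e * e / (2 * L + 1)"
  have pos: "0 < 2 * L + 1" using L0 by linarith
  have d0: "0 < d" unfolding d_def by (rule divide_pos_pos) (use assms(2) pos in auto)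
  have dd: "d * (2 * L + 1) = e\<^sup>2" unfolding d_def power2_eq_square using pos by simp
  obtain N where N: "L - d < wn N \<phi>"
    using l2_approx[OF assms(1) d0] unfolding L_def by blast
  define K where "K = max N 0"
  have "wn N \<phi> \<le> wn K \<phi>" by (rule wn_mono) (simp add: K_def)
  then have wK: "L - d < wn K \<phi>" using N by linarith
  have wK2: "wn K \<phi> \<le> L" unfolding L_def by (rule l2_wn_le[OF assms(1)])
  have key: "L\<^sup>2 - (wn K \<phi>)\<^sup>2 \<le> e\<^sup>2"
  proof -
    have "L\<^sup>2 - (wn K \<phi>)\<^sup>2 = (L - wn K \<phi>) * (L + wn K \<phi>)"
      by (simp add: power2_eq_square algebra_simps)
    also have "\<dots> \<le> d * (2 * L + 1)"
      by (rule mult_mono) (use wK wK2 L0 d0 wn_nonneg[of K \<phi>] in linarith)+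
    finally show ?thesis using dd by linarith
  qed
  have M: "wn M (\<lambda>n s. \<phi> n s - trunc K \<phi> n s) \<le> e" for M
  proof -
    have a: "(wn M (\<lambda>n s. \<phi> n s - trunc K \<phi> n s))\<^sup>2 \<le> (wn (max M K) \<phi>)\<^sup>2 - (wn K \<phi>)\<^sup>2"
      using wn_trunc_diff[of M \<phi> K] by linarith
    have "wn (max M K) \<phi> \<le> L" unfolding L_def by (rule l2_wn_le[OF assms(1)])
    then have b: "(wn (max M K) \<phi>)\<^sup>2 \<le> L\<^sup>2" by (rule power_mono) simp
    have "(wn M (\<lambda>n s. \<phi> n s - trunc K \<phi> n s))\<^sup>2 \<le> e\<^sup>2" using a b key by linarith
    then show ?thesis by (rule power2_le_imp_le) (use assms(2) in linarith)
  qed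
  have "l2norm (\<lambda>n s. \<phi> n s - trunc K \<phi> n s) \<le> e" by (rule l2I(2)) (rule M)
  moreover have "K \<ge> 0" by (simp add: K_def)
  ultimately show ?thesis by blast
qed

lemma cmod_lin2:
  fixes a b :: real
  shows "(cmod (of_real a * x + of_real b * y))\<^sup>2 = a\<^sup>2 * (cmod x)\<^sup>2 + b\<^sup>2 * (cmod y)\<^sup>2 + 2 * a * b * Re (x * cnj y)"
  unfolding cmod_power2 by (simp add: power2_eq_square algebra_simps)

lemma cmod_Q2:
  fixes c d l :: real
  shows "(cmod ((of_real c + \<i> * of_real l) * x - of_real d * y))\<^sup>2 + (cmod (of_real d * x + (of_real c - \<i> * of_real l) * y))\<^sup>2
     = (c\<^sup>2 + d\<^sup>2 + l\<^sup>2) * ((cmod x)\<^sup>2 + (cmod y)\<^sup>2)"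
  unfolding cmod_power2 by (simp add: power2_eq_square algebra_simps)


definition Sg :: "real \<Rightarrow> real \<Rightarrow> int \<Rightarrow> state \<Rightarrow> state" where
  "Sg a b p \<phi> = (\<lambda>n s. if s then of_real a * \<phi> (n + p) True + of_real b * \<phi> n False
                          else of_real a * \<phi> (n - p) False - of_real b * \<phi> n True)"

definition Qg :: "(int \<Rightarrow> real) \<Rightarrow> (int \<Rightarrow> real) \<Rightarrow> real \<Rightarrow> state \<Rightarrow> state" where
  "Qg c d l \<phi> = (\<lambda>n s. if s then (of_real (c n) + \<i> * of_real l) * \<phi> n True - of_real (d n) * \<phi> n False
                          else of_real (d n) * \<phi> n True + (of_real (c n) - \<i> * of_real l) * \<phi> n False)"

lemma Sop_eq: "Sop lam = Sg lam (- cpl lam) (-1)"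
  by (intro ext) (simp add: Sop_def Sg_def)

definition cc :: "real \<Rightarrow> real \<Rightarrow> real \<Rightarrow> int \<Rightarrow> real" where
  "cc lam \<Phi> \<theta> n = lam * cos (2 * pi * (of_int n * \<Phi> + \<theta>))"
definition ss :: "real \<Rightarrow> real \<Rightarrow> real \<Rightarrow> int \<Rightarrow> real" where
  "ss lam \<Phi> \<theta> n = lam * sin (2 * pi * (of_int n * \<Phi> + \<theta>))"

lemma Qop_eq: "Qop lam \<Phi> \<theta> = Qg (cc lam \<Phi> \<theta>) (ss lam \<Phi> \<theta>) (cpl lam)"
  by (intro ext) (simp add: Qop_def Qg_def cc_def ss_def Let_def)

lemma cpl_sq: assumes "lam \<in> {0..1}" shows "lam\<^sup>2 + (cpl lam)\<^sup>2 = 1"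
proof -
  have "lam\<^sup>2 \<le> 1" using assms by (intro power_le_one) auto
  then show ?thesis unfolding cpl_def by simp
qed

lemma cpl_nonneg: assumes "lam \<in> {0..1}" shows "0 \<le> cpl lam"
proof -
  have "lam\<^sup>2 \<le> 1" using assms by (intro power_le_one) auto
  then show ?thesis unfolding cpl_def by simp
qed

lemma ccss_sq: "lam \<in> {0..1} \<Longrightarrow> (cc lam \<Phi> \<theta> n)\<^sup>2 + (ss lam \<Phi> \<theta> n)\<^sup>2 + (cpl lam)\<^sup>2 = 1"
proof -
  assume "lam \<in> {0..1}"
  then have "lam\<^sup>2 + (cpl lam)\<^sup>2 = 1" by (rule cpl_sq)
  moreover have "(cc lam \<Phi> \<theta> n)\<^sup>2 + (ss lam \<Phi> \<theta> n)\<^sup>2 = lam\<^sup>2"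
    unfolding cc_def ss_def power_mult_distrib
    by (metis distrib_left mult.right_neutral sin_cos_squared_add2)
  ultimately show ?thesis by linarith
qed

lemma Sg_inv: "a\<^sup>2 + b\<^sup>2 = 1 \<Longrightarrow> Sg a b p (Sg a (-b) (-p) \<phi>) = \<phi>"
proof (intro ext)
  fix n s assume ab: "a\<^sup>2 + b\<^sup>2 = 1"
  then have ab': "complex_of_real a * of_real a + of_real b * of_real b = 1"
    by (metis of_real_1 of_real_add of_real_mult power2_eq_square)
  show "Sg a b p (Sg a (-b) (-p) \<phi>) n s = \<phi> n s"
  proof (cases s)
    case True
    have "Sg a b p (Sg a (-b) (-p) \<phi>) n s = (of_real a * of_real a + of_real b * of_real b) * \<phi> n True"
      using True by (simp add: Sg_def algebra_simps)
    then show ?thesis using True ab' by simp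
  next
    case False
    have "Sg a b p (Sg a (-b) (-p) \<phi>) n s = (of_real a * of_real a + of_real b * of_real b) * \<phi> n False"
      using False by (simp add: Sg_def algebra_simps)
    then show ?thesis using False ab' by simp
  qed
qed

lemma Qg_inv: "(\<And>n. (c n)\<^sup>2 + (d n)\<^sup>2 + l\<^sup>2 = 1) \<Longrightarrow> Qg c d l (Qg c (\<lambda>n. - d n) (-l) \<phi>) = \<phi>"
proof (intro ext)
  fix n s assume h: "\<And>n. (c n)\<^sup>2 + (d n)\<^sup>2 + l\<^sup>2 = 1"
  have h': "complex_of_real (c n) * of_real (c n) + of_real (d n) * of_real (d n) + of_real l * of_real l = 1"
    using h[of n] by (metis of_real_1 of_real_add of_real_mult power2_eq_square)
  have e1: "Qg c d l (Qg c (\<lambda>n. - d n) (-l) \<phi>) n True = (of_real (c n) * of_real (c n) + of_real (d n) * of_real (d n) + of_real l * of_real l) * \<phi> n True"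
    by (simp add: Qg_def algebra_simps)
  have e2: "Qg c d l (Qg c (\<lambda>n. - d n) (-l) \<phi>) n False = (of_real (c n) * of_real (c n) + of_real (d n) * of_real (d n) + of_real l * of_real l) * \<phi> n False"
    by (simp add: Qg_def algebra_simps)
  show "Qg c d l (Qg c (\<lambda>n. - d n) (-l) \<phi>) n s = \<phi> n s"
    using e1 e2 h' by (cases s) simp_all
qed

lemma sq_Qg: "(\<And>n. (c n)\<^sup>2 + (d n)\<^sup>2 + l\<^sup>2 = 1) \<Longrightarrow> sq (Qg c d l \<phi>) n = sq \<phi> n"
  unfolding sq_def Qg_def using cmod_Q2[of "c n" l "\<phi> n True" "d n" "\<phi> n False"] by simp

lemma supp_Qg: "supp_in K \<phi> \<Longrightarrow> supp_in K (Qg c d l \<phi>)"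
  by (simp add: supp_in_def Qg_def)

lemma supp_Sg: "supp_in K \<phi> \<Longrightarrow> \<bar>p\<bar> \<le> 1 \<Longrightarrow> supp_in (K + 1) (Sg a b p \<phi>)"
  unfolding supp_in_def Sg_def
proof (intro allI impI)
  fix n s assume h: "\<forall>n s. K < \<bar>n\<bar> \<longrightarrow> \<phi> n s = 0" "\<bar>p\<bar> \<le> 1" "K + 1 < \<bar>n\<bar>"
  then have "K < \<bar>n + p\<bar>" "K < \<bar>n - p\<bar>" "K < \<bar>n\<bar>" by auto
  then show "(if s then of_real a * \<phi> (n + p) True + of_real b * \<phi> n False
         else of_real a * \<phi> (n - p) False - of_real b * \<phi> n True) = 0"
    using h(1) by simp
qed

lemma sq_Sg: "sq (Sg a b p \<phi>) n = a\<^sup>2 * (cmod (\<phi> (n + p) True))\<^sup>2 + b\<^sup>2 * (cmod (\<phi> n False))\<^sup>2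
   + a\<^sup>2 * (cmod (\<phi> (n - p) False))\<^sup>2 + b\<^sup>2 * (cmod (\<phi> n True))\<^sup>2
   + 2 * a * b * Re (\<phi> (n + p) True * cnj (\<phi> n False)) - 2 * a * b * Re (\<phi> (n - p + p) True * cnj (\<phi> (n - p) False))"
proof -
  have 1: "sq (Sg a b p \<phi>) n = (cmod (of_real a * \<phi> (n + p) True + of_real b * \<phi> n False))\<^sup>2
     + (cmod (of_real a * \<phi> (n - p) False + of_real (-b) * \<phi> n True))\<^sup>2"
    by (simp add: sq_def Sg_def)
  have 2: "Re (\<phi> (n - p) False * cnj (\<phi> n True)) = Re (\<phi> (n - p + p) True * cnj (\<phi> (n - p) False))"
    by (simp add: algebra_simps)
  show ?thesis unfolding 1 cmod_lin2 2 by simp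
qed


lemma ws_Sg:
  assumes ab: "a\<^sup>2 + b\<^sup>2 = 1" and p: "\<bar>p\<bar> \<le> 1" and K: "supp_in K \<phi>" and N: "K + 1 \<le> N"
  shows "(\<Sum>n\<in>{-N..N}. sq (Sg a b p \<phi>) n) = (\<Sum>n\<in>{-N..N}. sq \<phi> n)"
proof -
  define F1 where "F1 m = (cmod (\<phi> m True))\<^sup>2" for m
  define F2 where "F2 m = (cmod (\<phi> m False))\<^sup>2" for m
  define h where "h m = 2 * a * b * Re (\<phi> (m + p) True * cnj (\<phi> m False))" for m
  have s1: "\<And>m. K < \<bar>m\<bar> \<Longrightarrow> F1 m = 0" using K by (simp add: supp_in_def F1_def)
  have s2: "\<And>m. K < \<bar>m\<bar> \<Longrightarrow> F2 m = 0" using K by (simp add: supp_in_def F2_def)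
  have s3: "\<And>m. K < \<bar>m\<bar> \<Longrightarrow> h m = 0" using K by (simp add: supp_in_def h_def)
  have Np: "K + \<bar>p\<bar> \<le> N" "K + \<bar>-p\<bar> \<le> N" using N p by auto
  have e1: "(\<Sum>n\<in>{-N..N}. F1 (n + p)) = (\<Sum>n\<in>{-N..N}. F1 n)" by (rule sum_shift[OF s1 Np(1)])
  have e2: "(\<Sum>n\<in>{-N..N}. F2 (n - p)) = (\<Sum>n\<in>{-N..N}. F2 n)"
    using sum_shift[OF s2 Np(2)] by simp
  have e3: "(\<Sum>n\<in>{-N..N}. h (n - p)) = (\<Sum>n\<in>{-N..N}. h n)"
    using sum_shift[OF s3 Np(2)] by simp
  have pt: "sq (Sg a b p \<phi>) n = a\<^sup>2 * F1 (n + p) + b\<^sup>2 * F2 n + a\<^sup>2 * F2 (n - p) + b\<^sup>2 * F1 n + h n - h (n - p)" for n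
    unfolding sq_Sg F1_def F2_def h_def by simp
  have "(\<Sum>n\<in>{-N..N}. sq (Sg a b p \<phi>) n)
      = a\<^sup>2 * (\<Sum>n\<in>{-N..N}. F1 (n + p)) + b\<^sup>2 * (\<Sum>n\<in>{-N..N}. F2 n) + a\<^sup>2 * (\<Sum>n\<in>{-N..N}. F2 (n - p))
        + b\<^sup>2 * (\<Sum>n\<in>{-N..N}. F1 n) + (\<Sum>n\<in>{-N..N}. h n) - (\<Sum>n\<in>{-N..N}. h (n - p))"
    unfolding pt by (simp add: sum.distrib sum_subtractf sum_distrib_left)
  also have "\<dots> = (a\<^sup>2 + b\<^sup>2) * ((\<Sum>n\<in>{-N..N}. F1 n) + (\<Sum>n\<in>{-N..N}. F2 n))"
    unfolding e1 e2 e3 by (simp add: algebra_simps)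
  also have "\<dots> = (\<Sum>n\<in>{-N..N}. sq \<phi> n)"
    unfolding ab by (simp add: sq_def F1_def F2_def sum.distrib)
  finally show ?thesis .
qed

definition loc1 :: "(state \<Rightarrow> state) \<Rightarrow> bool" where
  "loc1 A \<longleftrightarrow> (\<forall>\<phi> \<phi>' n s. (\<forall>s'. \<phi> (n-1) s' = \<phi>' (n-1) s' \<and> \<phi> n s' = \<phi>' n s' \<and> \<phi> (n+1) s' = \<phi>' (n+1) s')
      \<longrightarrow> A \<phi> n s = A \<phi>' n s)"

definition isofin :: "(state \<Rightarrow> state) \<Rightarrow> bool" where
  "isofin A \<longleftrightarrow> (\<forall>K \<phi>. supp_in K \<phi> \<longrightarrow> supp_in (K+1) (A \<phi>) \<and> (\<forall>N\<ge>K+1. wn N (A \<phi>) = wn N \<phi>))"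

lemma contraction:
  assumes "loc1 A" "isofin A" "\<phi> \<in> l2"
  shows "A \<phi> \<in> l2" "l2norm (A \<phi>) \<le> l2norm \<phi>"
proof -
  have "wn N (A \<phi>) \<le> l2norm \<phi>" for N
  proof -
    define t where "t = trunc (N+1) \<phi>"
    have "wn N (A \<phi>) = wn N (A t)"
    proof (rule wn_cong)
      fix n s assume "\<bar>n\<bar> \<le> N"
      then have "\<forall>s'. \<phi> (n-1) s' = t (n-1) s' \<and> \<phi> n s' = t n s' \<and> \<phi> (n+1) s' = t (n+1) s'"
        by (simp add: t_def trunc_def abs_le_iff)
      then show "A \<phi> n s = A t n s"
        using assms(1) unfolding loc1_def by blast
    qed
    also have "\<dots> \<le> wn (N+2) (A t)" by (rule wn_mono) simp
    also have "\<dots> = wn (N+2) t"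
      using assms(2) supp_trunc[of "N+1" \<phi>] unfolding isofin_def t_def by auto
    also have "\<dots> = wn (N+1) t" by (rule wn_supp) (auto simp: t_def supp_trunc)
    also have "\<dots> = wn (N+1) \<phi>" by (simp add: t_def wn_trunc)
    also have "\<dots> \<le> l2norm \<phi>" by (rule l2_wn_le[OF assms(3)])
    finally show ?thesis .
  qed
  then show "A \<phi> \<in> l2" "l2norm (A \<phi>) \<le> l2norm \<phi>" using l2I by blast+
qed

definition SQ where "SQ a b p c d l = (\<lambda>\<phi>. Sg a b p (Qg c d l \<phi>))"
definition QS where "QS c d l a b p = (\<lambda>\<phi>. Qg c d l (Sg a b p \<phi>))"

lemma loc1_SQ: "p \<in> {-1, 1} \<Longrightarrow> loc1 (SQ a b p c d l)"
  unfolding loc1_def SQ_def Sg_def Qg_def by auto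

lemma loc1_QS: "p \<in> {-1, 1} \<Longrightarrow> loc1 (QS c d l a b p)"
  unfolding loc1_def QS_def Sg_def Qg_def by auto

lemma isofin_SQ:
  assumes "a\<^sup>2 + b\<^sup>2 = 1" "\<bar>p\<bar> \<le> 1" "\<And>n. (c n)\<^sup>2 + (d n)\<^sup>2 + l\<^sup>2 = 1"
  shows "isofin (SQ a b p c d l)"
  unfolding isofin_def
proof (intro allI impI)
  fix K \<phi> assume K: "supp_in K \<phi>"
  then have Q: "supp_in K (Qg c d l \<phi>)" by (rule supp_Qg)
  have 1: "supp_in (K + 1) (SQ a b p c d l \<phi>)" unfolding SQ_def by (rule supp_Sg[OF Q assms(2)])
  have "\<forall>N\<ge>K + 1. wn N (SQ a b p c d l \<phi>) = wn N \<phi>"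
  proof (intro allI impI)
    fix N assume N: "K + 1 \<le> N"
    show "wn N (SQ a b p c d l \<phi>) = wn N \<phi>"
      unfolding wn_def2 SQ_def ws_Sg[OF assms(1,2) Q N] sq_Qg[OF assms(3)] ..
  qed
  with 1 show "supp_in (K + 1) (SQ a b p c d l \<phi>) \<and> (\<forall>N\<ge>K + 1. wn N (SQ a b p c d l \<phi>) = wn N \<phi>)" by blast
qed

lemma isofin_QS:
  assumes "a\<^sup>2 + b\<^sup>2 = 1" "\<bar>p\<bar> \<le> 1" "\<And>n. (c n)\<^sup>2 + (d n)\<^sup>2 + l\<^sup>2 = 1"
  shows "isofin (QS c d l a b p)"
  unfolding isofin_def
proof (intro allI impI)
  fix K \<phi> assume K: "supp_in K \<phi>"
  have S: "supp_in (K+1) (Sg a b p \<phi>)" by (rule supp_Sg[OF K assms(2)])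
  have 1: "supp_in (K + 1) (QS c d l a b p \<phi>)" unfolding QS_def by (rule supp_Qg[OF S])
  have "\<forall>N\<ge>K + 1. wn N (QS c d l a b p \<phi>) = wn N \<phi>"
  proof (intro allI impI)
    fix N assume N: "K + 1 \<le> N"
    show "wn N (QS c d l a b p \<phi>) = wn N \<phi>"
      unfolding wn_def2 QS_def sq_Qg[OF assms(3)] ws_Sg[OF assms(1,2) K N] ..
  qed
  with 1 show "supp_in (K + 1) (QS c d l a b p \<phi>) \<and> (\<forall>N\<ge>K + 1. wn N (QS c d l a b p \<phi>) = wn N \<phi>)" by blast
qed

lemma SQ_add: "SQ a b p c d l (\<lambda>n s. \<phi> n s + \<psi> n s) = (\<lambda>n s. SQ a b p c d l \<phi> n s + SQ a b p c d l \<psi> n s)"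
  by (intro ext) (simp add: SQ_def Sg_def Qg_def algebra_simps)

lemma SQ_scale: "SQ a b p c d l (\<lambda>n s. z * \<phi> n s) = (\<lambda>n s. z * SQ a b p c d l \<phi> n s)"
  by (intro ext) (simp add: SQ_def Sg_def Qg_def algebra_simps)

lemma SQ_cont:
  assumes "\<And>n s. (\<lambda>k. X k n s) \<longlonglongrightarrow> \<phi> n s"
  shows "(\<lambda>k. SQ a b p c d l (X k) n s) \<longlonglongrightarrow> SQ a b p c d l \<phi> n s"
  unfolding SQ_def Sg_def Qg_def by (cases s) (simp_all, (intro tendsto_intros assms)+)

definition Wop where "Wop lam1 lam2 \<Phi> \<theta> = SQ lam1 (- cpl lam1) (-1) (cc lam2 \<Phi> \<theta>) (ss lam2 \<Phi> \<theta>) (cpl lam2)"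
definition Winv where "Winv lam1 lam2 \<Phi> \<theta> = QS (cc lam2 \<Phi> \<theta>) (\<lambda>n. - ss lam2 \<Phi> \<theta> n) (- cpl lam2) lam1 (cpl lam1) 1"

lemma UAMO_Wop: "UAMO lam1 lam2 \<Phi> \<theta> = Wop lam1 lam2 \<Phi> \<theta>"
  unfolding UAMO_def Wop_def SQ_def Sop_eq Qop_eq by (simp add: comp_def)

locale lams =
  fixes lam1 lam2 :: real
  assumes l1: "lam1 \<in> {0..1}" and l2: "lam2 \<in> {0..1}"
begin

lemma ab1: "lam1\<^sup>2 + (- cpl lam1)\<^sup>2 = 1" "lam1\<^sup>2 + (cpl lam1)\<^sup>2 = 1"
  using cpl_sq[OF l1] by simp_all

lemma cd2: "(cc lam2 \<Phi> \<theta> n)\<^sup>2 + (ss lam2 \<Phi> \<theta> n)\<^sup>2 + (cpl lam2)\<^sup>2 = 1"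
      "(cc lam2 \<Phi> \<theta> n)\<^sup>2 + (- ss lam2 \<Phi> \<theta> n)\<^sup>2 + (- cpl lam2)\<^sup>2 = 1"
  using ccss_sq[OF l2] by simp_all

lemma W_loc1: "loc1 (Wop lam1 lam2 \<Phi> \<theta>)"
  unfolding Wop_def by (rule loc1_SQ) simp

lemma Winv_loc1: "loc1 (Winv lam1 lam2 \<Phi> \<theta>)"
  unfolding Winv_def by (rule loc1_QS) simp

lemma W_isofin: "isofin (Wop lam1 lam2 \<Phi> \<theta>)"
  unfolding Wop_def by (rule isofin_SQ) (use ab1 cd2 in auto)

lemma Winv_isofin: "isofin (Winv lam1 lam2 \<Phi> \<theta>)"
  unfolding Winv_def by (rule isofin_QS) (use ab1 cd2 in auto)

lemma W_Winv: "Wop lam1 lam2 \<Phi> \<theta> (Winv lam1 lam2 \<Phi> \<theta> \<phi>) = \<phi>"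
proof -
  have "Qg (cc lam2 \<Phi> \<theta>) (ss lam2 \<Phi> \<theta>) (cpl lam2) (Qg (cc lam2 \<Phi> \<theta>) (\<lambda>n. - ss lam2 \<Phi> \<theta> n) (- cpl lam2) \<psi>) = \<psi>" for \<psi>
    by (rule Qg_inv) (rule cd2(1))
  moreover have "Sg lam1 (- cpl lam1) (-1) (Sg lam1 (- (- cpl lam1)) (- (-1)) \<phi>) = \<phi>"
    by (rule Sg_inv) (rule ab1(1))
  ultimately show ?thesis unfolding Wop_def Winv_def SQ_def QS_def by simp
qed

lemma Winv_W: "Winv lam1 lam2 \<Phi> \<theta> (Wop lam1 lam2 \<Phi> \<theta> \<phi>) = \<phi>"
proof -
  have "Qg (cc lam2 \<Phi> \<theta>) (\<lambda>n. - ss lam2 \<Phi> \<theta> n) (- cpl lam2) (Qg (cc lam2 \<Phi> \<theta>) (\<lambda>n. - (- ss lam2 \<Phi> \<theta> n)) (- (- cpl lam2)) \<psi>) = \<psi>" for \<psi>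
    by (rule Qg_inv) (rule cd2(2))
  moreover have "Sg lam1 (cpl lam1) 1 (Sg lam1 (- cpl lam1) (- 1) \<psi>) = \<psi>" for \<psi>
    using Sg_inv[OF ab1(2), of 1 \<psi>] by simp
  ultimately show ?thesis unfolding Wop_def Winv_def SQ_def QS_def by simp
qed

lemma W_l2: "\<phi> \<in> l2 \<Longrightarrow> Wop lam1 lam2 \<Phi> \<theta> \<phi> \<in> l2"
  by (rule contraction(1)[OF W_loc1 W_isofin])

lemma Winv_l2: "\<phi> \<in> l2 \<Longrightarrow> Winv lam1 lam2 \<Phi> \<theta> \<phi> \<in> l2"
  by (rule contraction(1)[OF Winv_loc1 Winv_isofin])

lemma W_norm: assumes "\<phi> \<in> l2" shows "l2norm (Wop lam1 lam2 \<Phi> \<theta> \<phi>) = l2norm \<phi>"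
proof -
  have a: "l2norm (Wop lam1 lam2 \<Phi> \<theta> \<phi>) \<le> l2norm \<phi>" by (rule contraction(2)[OF W_loc1 W_isofin assms])
  have "l2norm (Winv lam1 lam2 \<Phi> \<theta> (Wop lam1 lam2 \<Phi> \<theta> \<phi>)) \<le> l2norm (Wop lam1 lam2 \<Phi> \<theta> \<phi>)"
    by (rule contraction(2)[OF Winv_loc1 Winv_isofin W_l2[OF assms]])
  then show ?thesis using a by (simp add: Winv_W)
qed

lemma W_add: "Wop lam1 lam2 \<Phi> \<theta> (\<lambda>n s. \<phi> n s + \<psi> n s) = (\<lambda>n s. Wop lam1 lam2 \<Phi> \<theta> \<phi> n s + Wop lam1 lam2 \<Phi> \<theta> \<psi> n s)"
  unfolding Wop_def by (rule SQ_add)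

lemma W_scale: "Wop lam1 lam2 \<Phi> \<theta> (\<lambda>n s. z * \<phi> n s) = (\<lambda>n s. z * Wop lam1 lam2 \<Phi> \<theta> \<phi> n s)"
  unfolding Wop_def by (rule SQ_scale)

lemma W_cont: "(\<And>n s. (\<lambda>k. X k n s) \<longlonglongrightarrow> \<phi> n s) \<Longrightarrow> (\<lambda>k. Wop lam1 lam2 \<Phi> \<theta> (X k) n s) \<longlonglongrightarrow> Wop lam1 lam2 \<Phi> \<theta> \<phi> n s"
  unfolding Wop_def by (rule SQ_cont)

lemma W_supp: "supp_in K \<phi> \<Longrightarrow> supp_in (K+1) (Wop lam1 lam2 \<Phi> \<theta> \<phi>)"
  using W_isofin unfolding isofin_def by blast

lemma W_wn: "supp_in K \<phi> \<Longrightarrow> K + 1 \<le> N \<Longrightarrow> wn N (Wop lam1 lam2 \<Phi> \<theta> \<phi>) = wn N \<phi>"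
  using W_isofin unfolding isofin_def by blast

end

lemma wn_tendsto:
  assumes "\<And>n s. (\<lambda>k. X k n s) \<longlonglongrightarrow> \<phi> n s"
  shows "(\<lambda>k. wn N (X k)) \<longlonglongrightarrow> wn N \<phi>"
  unfolding wn_def2 sq_def by (intro tendsto_intros assms)

lemma perturb:
  fixes A B :: "state \<Rightarrow> state" and c b :: real
  assumes Al2: "\<And>\<phi>. \<phi> \<in> l2 \<Longrightarrow> A \<phi> \<in> l2"
    and Abelow: "\<And>\<phi>. \<phi> \<in> l2 \<Longrightarrow> c * l2norm \<phi> \<le> l2norm (A \<phi>)"
    and Asurj: "\<And>\<psi>. \<psi> \<in> l2 \<Longrightarrow> \<exists>\<phi>\<in>l2. A \<phi> = \<psi>"
    and Bl2: "\<And>\<phi>. \<phi> \<in> l2 \<Longrightarrow> B \<phi> \<in> l2"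
    and Bnorm: "\<And>\<phi>. \<phi> \<in> l2 \<Longrightarrow> l2norm (B \<phi>) \<le> b * l2norm \<phi>"
    and bc: "0 \<le> b" "b < c"
    and lin: "\<And>\<phi> \<psi>. (\<lambda>n s. A (\<lambda>n s. \<phi> n s + \<psi> n s) n s + B (\<lambda>n s. \<phi> n s + \<psi> n s) n s)
                = (\<lambda>n s. (A \<phi> n s + B \<phi> n s) + (A \<psi> n s + B \<psi> n s))"
    and cont: "\<And>X \<phi> n s. (\<And>n s. (\<lambda>k. X k n s) \<longlonglongrightarrow> \<phi> n s) \<Longrightarrow>
                 (\<lambda>k. A (X k) n s + B (X k) n s) \<longlonglongrightarrow> A \<phi> n s + B \<phi> n s"
    and \<psi>: "\<psi> \<in> l2"
  shows "\<exists>\<phi>\<in>l2. (\<lambda>n s. A \<phi> n s + B \<phi> n s) = \<psi>"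
proof -
  define T where "T \<phi> = (\<lambda>n s. A \<phi> n s + B \<phi> n s)" for \<phi>
  have c0: "0 < c" using bc by linarith
  define q where "q = b / c"
  have q0: "0 \<le> q" "q < 1" using bc c0 by (auto simp: q_def)
  define R where "R yy = (SOME \<phi>. \<phi> \<in> l2 \<and> A \<phi> = yy)" for yy
  have R: "R yy \<in> l2" "A (R yy) = yy" if "yy \<in> l2" for yy
    using someI_ex[of "\<lambda>\<phi>. \<phi> \<in> l2 \<and> A \<phi> = yy"] Asurj[OF that] unfolding R_def by auto
  have Rn: "l2norm (R yy) \<le> l2norm yy / c" if "yy \<in> l2" for yy
    using Abelow[OF R(1)[OF that]] R(2)[OF that] c0 by (simp add: field_simps)
  have T0: "T (\<lambda>n s. 0) = (\<lambda>n s. 0)"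
  proof -
    have "T (\<lambda>n s. 0 + 0) = (\<lambda>n s. T (\<lambda>n s. 0) n s + T (\<lambda>n s. 0) n s)"
      using lin[of "\<lambda>n s. 0" "\<lambda>n s. 0"] unfolding T_def by simp
    then have "\<And>n s. T (\<lambda>n s. 0) n s = T (\<lambda>n s. 0) n s + T (\<lambda>n s. 0) n s" by (metis add_0)
    then show ?thesis by (intro ext) simp
  qed
  define res where "res y = (\<lambda>n s. \<psi> n s - T y n s)" for y
  define x where "x = rec_nat (\<lambda>n s. 0) (\<lambda>k y. (\<lambda>n s. y n s + R (res y) n s))"
  have x0: "x 0 = (\<lambda>n s. 0)" by (simp add: x_def)
  have xS: "x (Suc k) = (\<lambda>n s. x k n s + R (res (x k)) n s)" for k by (simp add: x_def)
  have inv: "x k \<in> l2 \<and> res (x k) \<in> l2 \<and> l2norm (res (x k)) \<le> q ^ k * l2norm \<psi>" for k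
  proof (induction k)
    case 0
    have "res (x 0) = \<psi>" by (simp add: x0 T0 res_def)
    then show ?case using \<psi> l2_zero by (simp add: x0)
  next
    case (Suc k)
    let ?r = "res (x k)"
    have rl: "?r \<in> l2" using Suc by blast
    have xl: "x (Suc k) \<in> l2" unfolding xS using Suc R(1)[OF rl] l2_add by blast
    have "T (x (Suc k)) = (\<lambda>n s. T (x k) n s + T (R ?r) n s)"
      unfolding xS T_def by (rule lin)
    then have "res (x (Suc k)) = (\<lambda>n s. ?r n s - T (R ?r) n s)"
      unfolding res_def by (intro ext) (simp add: algebra_simps)
    also have "\<dots> = (\<lambda>n s. - B (R ?r) n s)"
      unfolding T_def R(2)[OF rl] by simp
    finally have rS: "res (x (Suc k)) = (\<lambda>n s. - B (R ?r) n s)" .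
    have Bl: "B (R ?r) \<in> l2" by (rule Bl2[OF R(1)[OF rl]])
    have "l2norm (res (x (Suc k))) = l2norm (B (R ?r))" unfolding rS using l2_uminus[OF Bl] by simp
    also have "\<dots> \<le> b * l2norm (R ?r)" by (rule Bnorm[OF R(1)[OF rl]])
    also have "\<dots> \<le> b * (l2norm ?r / c)" by (rule mult_left_mono[OF Rn[OF rl] bc(1)])
    also have "\<dots> = q * l2norm ?r" by (simp add: q_def)
    also have "\<dots> \<le> q * (q ^ k * l2norm \<psi>)" using Suc q0 by (intro mult_left_mono) auto
    finally show ?case using xl rS l2_uminus[OF Bl] by simp
  qed
  define d where "d k = R (res (x k))" for k
  have dl: "d k \<in> l2" for k using R(1) inv unfolding d_def by blast
  have dn: "l2norm (d k) \<le> q ^ k * (l2norm \<psi> / c)" for k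
  proof -
    have "l2norm (d k) \<le> l2norm (res (x k)) / c" unfolding d_def using Rn inv by blast
    also have "\<dots> \<le> q ^ k * l2norm \<psi> / c" using inv[of k] c0 by (simp add: divide_right_mono)
    finally show ?thesis by simp
  qed
  have xsum: "x k n s = (\<Sum>j<k. d j n s)" for k n s
    by (induction k) (simp_all add: x0 xS d_def)
  define M where "M = (l2norm \<psi> / c) / (1 - q)"
  have geo: "(\<Sum>j<k. q ^ j) \<le> 1 / (1 - q)" for k
  proof -
    have "(\<Sum>j<k. q ^ j) = (1 - q ^ k) / (1 - q)" using q0 by (simp add: sum_gp_strict)
    also have "\<dots> \<le> 1 / (1 - q)" using q0 by (simp add: divide_right_mono)
    finally show ?thesis .
  qed
  have xn: "l2norm (x k) \<le> M" for k
  proof -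
    have "l2norm (x k) \<le> (\<Sum>j<k. q ^ j) * (l2norm \<psi> / c)"
    proof (induction k)
      case 0 then show ?case using l2_zero by (simp add: x0)
    next
      case (Suc k)
      have "l2norm (x (Suc k)) \<le> l2norm (x k) + l2norm (d k)"
        unfolding xS d_def[symmetric] using l2_add inv dl by blast
      also have "\<dots> \<le> (\<Sum>j<k. q ^ j) * (l2norm \<psi> / c) + q ^ k * (l2norm \<psi> / c)"
        using Suc dn[of k] by linarith
      finally show ?case by (simp add: algebra_simps)
    qed
    also have "\<dots> \<le> (1 / (1 - q)) * (l2norm \<psi> / c)"
      by (rule mult_right_mono[OF geo]) (use c0 in simp)
    finally show ?thesis by (simp add: M_def mult.commute)
  qed
  have summ: "summable (\<lambda>j. d j n s)" for n s
  proof (rule summable_comparison_test)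
    show "\<exists>N. \<forall>j\<ge>N. norm (d j n s) \<le> q ^ j * (l2norm \<psi> / c)"
      using l2_norm_point[OF dl] dn order_trans by blast
    show "summable (\<lambda>j. q ^ j * (l2norm \<psi> / c))"
      by (intro summable_mult2 summable_geometric) (use q0 in simp)
  qed
  define X where "X n s = (\<Sum>j. d j n s)" for n s
  have conv: "(\<lambda>k. x k n s) \<longlonglongrightarrow> X n s" for n s
    unfolding xsum X_def by (rule summable_LIMSEQ[OF summ])
  have Xl: "X \<in> l2" and "l2norm X \<le> M"
  proof -
    have "wn N X \<le> M" for N
    proof (rule LIMSEQ_le_const2)
      show "(\<lambda>k. wn N (x k)) \<longlonglongrightarrow> wn N X" by (rule wn_tendsto[OF conv])
      show "\<exists>N'. \<forall>k\<ge>N'. wn N (x k) \<le> M"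
        using l2_wn_le inv xn order_trans by blast
    qed
    then show "X \<in> l2" "l2norm X \<le> M" using l2I by blast+
  qed
  have "T X n s = \<psi> n s" for n s
  proof -
    have t1: "(\<lambda>k. T (x k) n s) \<longlonglongrightarrow> T X n s" unfolding T_def by (rule cont[OF conv])
    have Tx: "T (x k) n s = \<psi> n s - res (x k) n s" for k by (simp add: res_def)
    have "(\<lambda>k. res (x k) n s) \<longlonglongrightarrow> 0"
    proof (rule Lim_null_comparison)
      show "\<forall>\<^sub>F k in sequentially. norm (res (x k) n s) \<le> q ^ k * l2norm \<psi>"
        using l2_norm_point inv order_trans by (intro always_eventually allI) blast
      show "(\<lambda>k. q ^ k * l2norm \<psi>) \<longlonglongrightarrow> 0"
        by (intro tendsto_mult_left_zero LIMSEQ_power_zero) (use q0 in simp)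
    qed
    then have "(\<lambda>k. T (x k) n s) \<longlonglongrightarrow> \<psi> n s - 0" unfolding Tx by (intro tendsto_intros)
    then show ?thesis using t1 LIMSEQ_unique by fastforce
  qed
  then show ?thesis using Xl unfolding T_def by (intro bexI[of _ X]) auto
qed

definition APf :: "(state \<Rightarrow> state) \<Rightarrow> complex \<Rightarrow> bool" where
  "APf T z \<longleftrightarrow> (\<forall>e>0. \<exists>\<psi> K. supp_in K \<psi> \<and> \<psi> \<noteq> (\<lambda>n s. 0) \<and>
      l2norm (\<lambda>n s. T \<psi> n s - z * \<psi> n s) \<le> e * l2norm \<psi>)"

locale lamsW = lams +
  fixes \<Phi> \<theta> :: real
begin

abbreviation "W \<equiv> Wop lam1 lam2 \<Phi> \<theta>"

lemma Wz_l2: "\<phi> \<in> l2 \<Longrightarrow> (\<lambda>n s. W \<phi> n s - z * \<phi> n s) \<in> l2"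
  using l2_diff(1)[OF W_l2 l2_scale(1)] by blast

lemma Wz_bound: assumes "\<phi> \<in> l2"
  shows "l2norm (\<lambda>n s. W \<phi> n s - z * \<phi> n s) \<le> (1 + cmod z) * l2norm \<phi>"
  using l2_diff(2)[OF W_l2[OF assms] l2_scale(1)[OF assms, of z]] W_norm[OF assms] l2_scale(2)[OF assms, of z]
  by (simp add: algebra_simps)

lemma Wz_lower: assumes "\<phi> \<in> l2"
  shows "\<bar>1 - cmod z\<bar> * l2norm \<phi> \<le> l2norm (\<lambda>n s. W \<phi> n s - z * \<phi> n s)"
proof -
  let ?u = "\<lambda>n s. W \<phi> n s - z * \<phi> n s"
  have ul: "?u \<in> l2" by (rule Wz_l2[OF assms])
  have zl: "(\<lambda>n s. z * \<phi> n s) \<in> l2" by (rule l2_scale(1)[OF assms])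
  have 1: "l2norm (\<lambda>n s. ?u n s + z * \<phi> n s) \<le> l2norm ?u + l2norm (\<lambda>n s. z * \<phi> n s)"
    by (rule l2_add(2)[OF ul zl])
  have e1: "(\<lambda>n s. ?u n s + z * \<phi> n s) = W \<phi>" by simp
  have 2: "l2norm (\<lambda>n s. W \<phi> n s - ?u n s) \<le> l2norm (W \<phi>) + l2norm ?u"
    by (rule l2_diff(2)[OF W_l2[OF assms] ul])
  have e2: "(\<lambda>n s. W \<phi> n s - ?u n s) = (\<lambda>n s. z * \<phi> n s)" by simp
  have "l2norm \<phi> \<le> l2norm ?u + cmod z * l2norm \<phi>"
    using 1 unfolding e1 W_norm[OF assms] l2_scale(2)[OF assms] .
  moreover have "cmod z * l2norm \<phi> \<le> l2norm \<phi> + l2norm ?u"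
    using 2 unfolding e2 W_norm[OF assms] l2_scale(2)[OF assms] .
  ultimately show ?thesis by (simp add: abs_if algebra_simps)
qed

lemma W_zero: "W (\<lambda>n s. 0) = (\<lambda>n s. 0)"
  using W_scale[where z=0 and \<phi>="\<lambda>n s. 0"] by simp

lemma W_diff: "W (\<lambda>n s. \<phi> n s - \<psi> n s) = (\<lambda>n s. W \<phi> n s - W \<psi> n s)"
proof -
  have "W (\<lambda>n s. \<phi> n s + (-1) * \<psi> n s) = (\<lambda>n s. W \<phi> n s + (-1) * W \<psi> n s)"
    using W_add[where \<phi>=\<phi> and \<psi>="\<lambda>n s. (-1) * \<psi> n s"] W_scale[where z="-1" and \<phi>=\<psi>] by simp
  then show ?thesis by simp
qed

lemma surj_small:
  assumes "cmod z < 1" "\<psi> \<in> l2"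
  shows "\<exists>\<phi>\<in>l2. (\<lambda>n s. W \<phi> n s - z * \<phi> n s) = \<psi>"
proof -
  have "\<exists>\<phi>\<in>l2. (\<lambda>n s. W \<phi> n s + (\<lambda>\<phi> n s. (-z) * \<phi> n s) \<phi> n s) = \<psi>"
  proof (rule perturb[where c=1 and b="cmod z"])
    show "\<And>\<phi>. \<phi> \<in> l2 \<Longrightarrow> W \<phi> \<in> l2" by (rule W_l2)
    show "\<And>\<phi>. \<phi> \<in> l2 \<Longrightarrow> 1 * l2norm \<phi> \<le> l2norm (W \<phi>)" by (simp add: W_norm)
    show "\<And>\<psi>. \<psi> \<in> l2 \<Longrightarrow> \<exists>\<phi>\<in>l2. W \<phi> = \<psi>"
      using Winv_l2 W_Winv by blast
    show "\<And>\<phi>. \<phi> \<in> l2 \<Longrightarrow> (\<lambda>n s. (-z) * \<phi> n s) \<in> l2" by (rule l2_scale(1))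
    show "\<And>\<phi>. \<phi> \<in> l2 \<Longrightarrow> l2norm (\<lambda>n s. (-z) * \<phi> n s) \<le> cmod z * l2norm \<phi>"
      using l2_scale(2)[where c="-z"] by simp
    show "0 \<le> cmod z" "cmod z < 1" using assms by auto
    show "\<And>\<phi> \<psi>. (\<lambda>n s. W (\<lambda>n s. \<phi> n s + \<psi> n s) n s + (- z) * (\<phi> n s + \<psi> n s))
          = (\<lambda>n s. W \<phi> n s + (- z) * \<phi> n s + (W \<psi> n s + (- z) * \<psi> n s))"
      by (simp add: W_add algebra_simps)
    show "\<And>X \<phi> n s. (\<And>n s. (\<lambda>k. X k n s) \<longlonglongrightarrow> \<phi> n s) \<Longrightarrow>
          (\<lambda>k. W (X k) n s + (- z) * X k n s) \<longlonglongrightarrow> W \<phi> n s + (- z) * \<phi> n s"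
      by (intro tendsto_intros W_cont) auto
    show "\<psi> \<in> l2" by (rule assms)
  qed
  then show ?thesis by simp
qed

lemma surj_big:
  assumes "1 < cmod z" "\<psi> \<in> l2"
  shows "\<exists>\<phi>\<in>l2. (\<lambda>n s. W \<phi> n s - z * \<phi> n s) = \<psi>"
proof -
  have z0: "z \<noteq> 0" using assms by auto
  have "\<exists>\<phi>\<in>l2. (\<lambda>n s. (\<lambda>\<phi> n s. (-z) * \<phi> n s) \<phi> n s + W \<phi> n s) = \<psi>"
  proof (rule perturb[where c="cmod z" and b=1])
    show "\<And>\<phi>. \<phi> \<in> l2 \<Longrightarrow> (\<lambda>n s. (-z) * \<phi> n s) \<in> l2" by (rule l2_scale(1))
    show "\<And>\<phi>. \<phi> \<in> l2 \<Longrightarrow> cmod z * l2norm \<phi> \<le> l2norm (\<lambda>n s. (-z) * \<phi> n s)"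
      using l2_scale(2)[where c="-z"] by simp
    show "\<And>\<psi>. \<psi> \<in> l2 \<Longrightarrow> \<exists>\<phi>\<in>l2. (\<lambda>n s. (-z) * \<phi> n s) = \<psi>"
    proof -
      fix \<psi> :: state assume "\<psi> \<in> l2"
      then have "(\<lambda>n s. (- 1 / z) * \<psi> n s) \<in> l2" by (rule l2_scale(1))
      moreover have "(\<lambda>n s. (-z) * ((- 1 / z) * \<psi> n s)) = \<psi>" using z0 by simp
      ultimately show "\<exists>\<phi>\<in>l2. (\<lambda>n s. (-z) * \<phi> n s) = \<psi>" by (intro bexI[of _ "\<lambda>n s. (- 1 / z) * \<psi> n s"])
    qed
    show "\<And>\<phi>. \<phi> \<in> l2 \<Longrightarrow> W \<phi> \<in> l2" by (rule W_l2)
    show "\<And>\<phi>. \<phi> \<in> l2 \<Longrightarrow> l2norm (W \<phi>) \<le> 1 * l2norm \<phi>" by (simp add: W_norm)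
    show "0 \<le> (1::real)" "1 < cmod z" using assms by auto
    show "\<And>\<phi> \<psi>. (\<lambda>n s. (- z) * (\<phi> n s + \<psi> n s) + W (\<lambda>n s. \<phi> n s + \<psi> n s) n s)
          = (\<lambda>n s. (- z) * \<phi> n s + W \<phi> n s + ((- z) * \<psi> n s + W \<psi> n s))"
      by (simp add: W_add algebra_simps)
    show "\<And>X \<phi> n s. (\<And>n s. (\<lambda>k. X k n s) \<longlonglongrightarrow> \<phi> n s) \<Longrightarrow>
          (\<lambda>k. (- z) * X k n s + W (X k) n s) \<longlonglongrightarrow> (- z) * \<phi> n s + W \<phi> n s"
      by (intro tendsto_intros W_cont) auto
    show "\<psi> \<in> l2" by (rule assms)
  qed
  then show ?thesis by (simp add: add.commute)
qed

lemma surj_bb: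
  assumes c: "0 < c" "\<And>\<phi>. \<phi> \<in> l2 \<Longrightarrow> c * l2norm \<phi> \<le> l2norm (\<lambda>n s. W \<phi> n s - z * \<phi> n s)"
    and \<psi>: "\<psi> \<in> l2"
  shows "\<exists>\<phi>\<in>l2. (\<lambda>n s. W \<phi> n s - z * \<phi> n s) = \<psi>"
proof (cases "1 < cmod z")
  case True then show ?thesis using surj_big \<psi> by blast
next
  case False
  define e where "e = min c 1 / 3"
  have e0: "0 < e" "e \<le> c / 3" "e \<le> 1/3" using c(1) by (auto simp: e_def)
  define z' where "z' = of_real (1 - e) * z"
  have z'1: "cmod z' < 1"
  proof -
    have "cmod z' = \<bar>1 - e\<bar> * cmod z" unfolding z'_def norm_mult norm_of_real ..
    moreover have "\<bar>1 - e\<bar> = 1 - e" using e0 by simp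
    ultimately have "cmod z' = (1 - e) * cmod z" by simp
    also have "\<dots> \<le> (1 - e) * 1" using False e0 by (intro mult_left_mono) auto
    finally have "cmod z' \<le> 1 - e" by simp
    then show ?thesis using e0 by linarith
  qed
  have zz: "cmod (z' - z) \<le> e"
  proof -
    have "z' - z = - (of_real e * z)" by (simp add: z'_def algebra_simps)
    then have "cmod (z' - z) = e * cmod z" using e0 by (simp add: norm_mult)
    also have "\<dots> \<le> e * 1" using False e0 by (intro mult_left_mono) auto
    finally show ?thesis by simp
  qed
  have "\<exists>\<phi>\<in>l2. (\<lambda>n s. (\<lambda>\<phi> n s. W \<phi> n s - z' * \<phi> n s) \<phi> n s + (\<lambda>\<phi> n s. (z' - z) * \<phi> n s) \<phi> n s) = \<psi>"
  proof (rule perturb[where c="c - e" and b=e])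
    show "\<And>\<phi>. \<phi> \<in> l2 \<Longrightarrow> (\<lambda>n s. W \<phi> n s - z' * \<phi> n s) \<in> l2" by (rule Wz_l2)
    show "\<And>\<phi>. \<phi> \<in> l2 \<Longrightarrow> (c - e) * l2norm \<phi> \<le> l2norm (\<lambda>n s. W \<phi> n s - z' * \<phi> n s)"
    proof -
      fix \<phi> :: state assume p: "\<phi> \<in> l2"
      have "c * l2norm \<phi> \<le> l2norm (\<lambda>n s. W \<phi> n s - z * \<phi> n s)" by (rule c(2)[OF p])
      also have "(\<lambda>n s. W \<phi> n s - z * \<phi> n s) = (\<lambda>n s. (W \<phi> n s - z' * \<phi> n s) + (z' - z) * \<phi> n s)"
        by (simp add: algebra_simps)
      also have "l2norm \<dots> \<le> l2norm (\<lambda>n s. W \<phi> n s - z' * \<phi> n s) + l2norm (\<lambda>n s. (z' - z) * \<phi> n s)"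
        by (rule l2_add(2)[OF Wz_l2[OF p] l2_scale(1)[OF p]])
      also have "l2norm (\<lambda>n s. (z' - z) * \<phi> n s) = cmod (z' - z) * l2norm \<phi>" by (rule l2_scale(2)[OF p])
      also have "\<dots> \<le> e * l2norm \<phi>" by (rule mult_right_mono[OF zz]) simp
      finally show "(c - e) * l2norm \<phi> \<le> l2norm (\<lambda>n s. W \<phi> n s - z' * \<phi> n s)"
        by (simp add: algebra_simps)
    qed
    show "\<And>\<psi>. \<psi> \<in> l2 \<Longrightarrow> \<exists>\<phi>\<in>l2. (\<lambda>n s. W \<phi> n s - z' * \<phi> n s) = \<psi>"
      by (rule surj_small[OF z'1])
    show "\<And>\<phi>. \<phi> \<in> l2 \<Longrightarrow> (\<lambda>n s. (z' - z) * \<phi> n s) \<in> l2" by (rule l2_scale(1))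
    show "\<And>\<phi>. \<phi> \<in> l2 \<Longrightarrow> l2norm (\<lambda>n s. (z' - z) * \<phi> n s) \<le> e * l2norm \<phi>"
      using l2_scale(2) zz by (metis l2norm_nonneg mult_right_mono)
    show "0 \<le> e" "e < c - e" using e0 c(1) by auto
    show "\<And>\<phi> \<psi>. (\<lambda>n s. W (\<lambda>n s. \<phi> n s + \<psi> n s) n s - z' * (\<phi> n s + \<psi> n s) + (z' - z) * (\<phi> n s + \<psi> n s))
          = (\<lambda>n s. W \<phi> n s - z' * \<phi> n s + (z' - z) * \<phi> n s + (W \<psi> n s - z' * \<psi> n s + (z' - z) * \<psi> n s))"
      by (simp add: W_add algebra_simps)
    show "\<And>X \<phi> n s. (\<And>n s. (\<lambda>k. X k n s) \<longlonglongrightarrow> \<phi> n s) \<Longrightarrow>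
          (\<lambda>k. W (X k) n s - z' * X k n s + (z' - z) * X k n s) \<longlonglongrightarrow> W \<phi> n s - z' * \<phi> n s + (z' - z) * \<phi> n s"
      by (intro tendsto_intros W_cont) auto
    show "\<psi> \<in> l2" by (rule \<psi>)
  qed
  moreover have "(\<lambda>n s. W \<phi> n s - z' * \<phi> n s + (z' - z) * \<phi> n s) = (\<lambda>n s. W \<phi> n s - z * \<phi> n s)" for \<phi>
    by (simp add: algebra_simps)
  ultimately show ?thesis by simp
qed

lemma not_spec:
  assumes c: "0 < c" "\<And>\<phi>. \<phi> \<in> l2 \<Longrightarrow> c * l2norm \<phi> \<le> l2norm (\<lambda>n s. W \<phi> n s - z * \<phi> n s)"
  shows "z \<notin> op_spectrum W"
proof -
  define R where "R \<psi> = (SOME \<phi>. \<phi> \<in> l2 \<and> (\<lambda>n s. W \<phi> n s - z * \<phi> n s) = \<psi>)" for \<psi>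
  have R: "R \<psi> \<in> l2" "(\<lambda>n s. W (R \<psi>) n s - z * R \<psi> n s) = \<psi>" if "\<psi> \<in> l2" for \<psi>
    using someI_ex[of "\<lambda>\<phi>. \<phi> \<in> l2 \<and> (\<lambda>n s. W \<phi> n s - z * \<phi> n s) = \<psi>"] surj_bb[OF c that]
    unfolding R_def by auto
  have inj: "\<phi> = \<phi>'" if "\<phi> \<in> l2" "\<phi>' \<in> l2"
      "(\<lambda>n s. W \<phi> n s - z * \<phi> n s) = (\<lambda>n s. W \<phi>' n s - z * \<phi>' n s)" for \<phi> \<phi>'
  proof -
    let ?d = "\<lambda>n s. \<phi> n s - \<phi>' n s"
    have dl: "?d \<in> l2" by (rule l2_diff(1)[OF that(1,2)])
    have "(\<lambda>n s. W ?d n s - z * ?d n s) = (\<lambda>n s. (W \<phi> n s - z * \<phi> n s) - (W \<phi>' n s - z * \<phi>' n s))"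
      unfolding W_diff by (simp add: algebra_simps)
    also have "\<dots> = (\<lambda>n s. 0)" using that(3) by (metis (no_types) diff_self)
    finally have "c * l2norm ?d \<le> 0" using c(2)[OF dl] l2_zero by simp
    then have "l2norm ?d \<le> 0" using c(1) by (simp add: mult_le_0_iff)
    then have "?d = (\<lambda>n s. 0)" by (rule l2norm_eq0[OF dl])
    then show ?thesis by (intro ext) (metis eq_iff_diff_eq_0)
  qed
  have "\<forall>\<psi>\<in>l2. R \<psi> \<in> l2 \<and> (\<lambda>n s. W (R \<psi>) n s - z * R \<psi> n s) = \<psi> \<and> R (\<lambda>n s. W \<psi> n s - z * \<psi> n s) = \<psi>"
  proof
    fix \<psi> :: state assume p: "\<psi> \<in> l2"
    have "R (\<lambda>n s. W \<psi> n s - z * \<psi> n s) = \<psi>"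
      using inj[OF R(1)[OF Wz_l2[OF p]] p R(2)[OF Wz_l2[OF p]]] .
    then show "R \<psi> \<in> l2 \<and> (\<lambda>n s. W (R \<psi>) n s - z * R \<psi> n s) = \<psi> \<and> R (\<lambda>n s. W \<psi> n s - z * \<psi> n s) = \<psi>"
      using R[OF p] by blast
  qed
  moreover have "\<forall>\<psi>\<in>l2. l2norm (R \<psi>) \<le> (1 / c) * l2norm \<psi>"
  proof
    fix \<psi> :: state assume p: "\<psi> \<in> l2"
    have "c * l2norm (R \<psi>) \<le> l2norm \<psi>" using c(2)[OF R(1)[OF p]] R(2)[OF p] by simp
    then show "l2norm (R \<psi>) \<le> (1 / c) * l2norm \<psi>" using c(1) by (simp add: field_simps)
  qed
  ultimately show ?thesis unfolding op_spectrum_def by blast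
qed

lemma spec_unit: assumes "z \<in> op_spectrum W" shows "cmod z = 1"
proof (rule ccontr)
  assume "cmod z \<noteq> 1"
  then have "0 < \<bar>1 - cmod z\<bar>" by simp
  from not_spec[OF this Wz_lower] assms show False by blast
qed

lemma APf_spec: assumes "APf W z" shows "z \<in> op_spectrum W"
proof (rule ccontr)
  assume "z \<notin> op_spectrum W"
  then obtain R C where R: "\<And>\<psi>. \<psi> \<in> l2 \<Longrightarrow> R (\<lambda>n s. W \<psi> n s - z * \<psi> n s) = \<psi>"
    and C: "\<And>\<psi>. \<psi> \<in> l2 \<Longrightarrow> l2norm (R \<psi>) \<le> C * l2norm \<psi>"
    unfolding op_spectrum_def by blast
  define e where "e = 1 / (2 * (\<bar>C\<bar> + 1))"
  have e0: "0 < e" by (simp add: e_def add_pos_nonneg)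
  obtain \<psi> K where \<psi>: "supp_in K \<psi>" "\<psi> \<noteq> (\<lambda>n s. 0)"
    "l2norm (\<lambda>n s. W \<psi> n s - z * \<psi> n s) \<le> e * l2norm \<psi>"
    using assms e0 unfolding APf_def by blast
  have pl: "\<psi> \<in> l2" using supp_l2(1)[OF \<psi>(1)] .
  have pos: "0 < l2norm \<psi>" using l2norm_eq0[OF pl] \<psi>(2) by force
  have "l2norm \<psi> = l2norm (R (\<lambda>n s. W \<psi> n s - z * \<psi> n s))" using R[OF pl] by simp
  also have "\<dots> \<le> C * l2norm (\<lambda>n s. W \<psi> n s - z * \<psi> n s)" by (rule C[OF Wz_l2[OF pl]])
  also have "\<dots> \<le> \<bar>C\<bar> * l2norm (\<lambda>n s. W \<psi> n s - z * \<psi> n s)" by (rule mult_right_mono) auto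
  also have "\<dots> \<le> \<bar>C\<bar> * (e * l2norm \<psi>)" by (rule mult_left_mono[OF \<psi>(3)]) simp
  also have "\<dots> = (\<bar>C\<bar> / (2 * (\<bar>C\<bar> + 1))) * l2norm \<psi>" by (simp add: e_def)
  also have "\<dots> < 1 * l2norm \<psi>"
    by (rule mult_strict_right_mono[OF _ pos]) (simp add: field_simps)
  finally show False by simp
qed

lemma bb_from_fin:
  assumes e: "0 < e" "\<And>\<psi> K. supp_in K \<psi> \<Longrightarrow> e * l2norm \<psi> \<le> l2norm (\<lambda>n s. W \<psi> n s - z * \<psi> n s)"
    and p: "\<phi> \<in> l2"
  shows "e * l2norm \<phi> \<le> l2norm (\<lambda>n s. W \<phi> n s - z * \<phi> n s)"
proof (rule field_le_epsilon)
  fix eps :: real assume eps: "0 < eps"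
  define D where "D = e + 1 + cmod z"
  have D0: "0 < D" using e by (simp add: D_def add_pos_nonneg)
  define del where "del = eps / D"
  have del0: "0 < del" using eps D0 by (simp add: del_def)
  obtain K where K: "l2norm (\<lambda>n s. \<phi> n s - trunc K \<phi> n s) \<le> del"
    using l2_trunc_approx[OF p del0] by blast
  define t where "t = trunc K \<phi>"
  define u where "u = (\<lambda>n s. \<phi> n s - t n s)"
  have tl: "t \<in> l2" unfolding t_def by (rule supp_l2(1)[OF supp_trunc])
  have ul: "u \<in> l2" unfolding u_def by (rule l2_diff(1)[OF p tl])
  have un: "l2norm u \<le> del" using K by (simp add: u_def t_def)
  have "l2norm (\<lambda>n s. t n s + u n s) \<le> l2norm t + l2norm u" by (rule l2_add(2)[OF tl ul])
  moreover have "(\<lambda>n s. t n s + u n s) = \<phi>" by (simp add: u_def)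
  ultimately have n1: "l2norm \<phi> \<le> l2norm t + l2norm u" by simp
  have teq: "t = (\<lambda>n s. \<phi> n s - u n s)" by (simp add: u_def)
  have "(\<lambda>n s. W t n s - z * t n s) = (\<lambda>n s. (W \<phi> n s - z * \<phi> n s) - (W u n s - z * u n s))"
    by (subst (1 2) teq, unfold W_diff) (simp add: algebra_simps)
  then have "l2norm (\<lambda>n s. W t n s - z * t n s) \<le> l2norm (\<lambda>n s. W \<phi> n s - z * \<phi> n s) + l2norm (\<lambda>n s. W u n s - z * u n s)"
    using l2_diff(2)[OF Wz_l2[OF p] Wz_l2[OF ul]] by simp
  also have "\<dots> \<le> l2norm (\<lambda>n s. W \<phi> n s - z * \<phi> n s) + (1 + cmod z) * del"
    using Wz_bound[OF ul, of z] mult_left_mono[OF un, of "1 + cmod z"] by simp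
  finally have n2: "l2norm (\<lambda>n s. W t n s - z * t n s) \<le> l2norm (\<lambda>n s. W \<phi> n s - z * \<phi> n s) + (1 + cmod z) * del" .
  have n3: "e * l2norm t \<le> l2norm (\<lambda>n s. W t n s - z * t n s)" unfolding t_def by (rule e(2)[OF supp_trunc])
  have "e * l2norm \<phi> \<le> e * l2norm t + e * del" using n1 un e(1)
    by (metis add_mono distrib_left mult_left_mono order_trans less_imp_le order_refl)
  also have "\<dots> \<le> l2norm (\<lambda>n s. W \<phi> n s - z * \<phi> n s) + (1 + cmod z) * del + e * del"
    using n2 n3 by linarith
  also have "\<dots> = l2norm (\<lambda>n s. W \<phi> n s - z * \<phi> n s) + eps"
  proof -
    have "(1 + cmod z) * del + e * del = D * del" by (simp add: D_def algebra_simps)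
    also have "D * del = eps" using D0 by (simp add: del_def)
    finally show ?thesis by simp
  qed
  finally show "e * l2norm \<phi> \<le> l2norm (\<lambda>n s. W \<phi> n s - z * \<phi> n s) + eps" .
qed

lemma spec_APf: assumes "z \<in> op_spectrum W" shows "APf W z"
proof (rule ccontr)
  assume "\<not> APf W z"
  then obtain e where e: "0 < e" and h: "\<And>\<psi> K. supp_in K \<psi> \<Longrightarrow> \<psi> \<noteq> (\<lambda>n s. 0) \<Longrightarrow>
      e * l2norm \<psi> < l2norm (\<lambda>n s. W \<psi> n s - z * \<psi> n s)"
    unfolding APf_def by (meson not_le)
  have h2: "e * l2norm \<psi> \<le> l2norm (\<lambda>n s. W \<psi> n s - z * \<psi> n s)" if "supp_in K \<psi>" for \<psi> K
  proof (cases "\<psi> = (\<lambda>n s. 0)")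
    case True then show ?thesis using l2_zero W_zero by simp
  next
    case False then show ?thesis using h[OF that] by simp
  qed
  have bb: "e * l2norm \<phi> \<le> l2norm (\<lambda>n s. W \<phi> n s - z * \<phi> n s)" if "\<phi> \<in> l2" for \<phi>
    by (rule bb_from_fin[OF e h2 that])
  from not_spec[OF e bb] assms show False by blast
qed

end

definition Fs :: "real \<Rightarrow> real \<Rightarrow> int \<Rightarrow> (int \<Rightarrow> complex) \<Rightarrow> int \<Rightarrow> complex" where
  "Fs \<Phi> \<theta>' J f m = (\<Sum>n\<in>{-J..J}. cis (2 * pi * (of_int n * (of_int m * \<Phi> + \<theta>'))) * f n)"

definition Dp :: "real \<Rightarrow> real \<Rightarrow> real \<Rightarrow> int \<Rightarrow> state \<Rightarrow> state" where
  "Dp \<Phi> \<theta> \<theta>' J g m s = cis (- (2 * pi * (of_int m * \<theta>))) *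
     (if s then cnj (Fs \<Phi> \<theta>' J (\<lambda>n. g n True) m) - \<i> * cnj (Fs \<Phi> \<theta>' J (\<lambda>n. g n False) m)
      else - \<i> * cnj (Fs \<Phi> \<theta>' J (\<lambda>n. g n True) m) + cnj (Fs \<Phi> \<theta>' J (\<lambda>n. g n False) m))"

lemma Fs_add: "Fs \<Phi> \<theta>' J (\<lambda>n. f n + g n) m = Fs \<Phi> \<theta>' J f m + Fs \<Phi> \<theta>' J g m"
  unfolding Fs_def by (simp add: sum.distrib algebra_simps)

lemma Fs_diff: "Fs \<Phi> \<theta>' J (\<lambda>n. f n - g n) m = Fs \<Phi> \<theta>' J f m - Fs \<Phi> \<theta>' J g m"
  unfolding Fs_def by (simp add: sum_subtractf algebra_simps)

lemma Fs_scale: "Fs \<Phi> \<theta>' J (\<lambda>n. c * f n) m = c * Fs \<Phi> \<theta>' J f m"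
  unfolding Fs_def by (simp add: sum_distrib_left algebra_simps)

lemma Fs_shift_m1:
  assumes "\<And>n. J - 1 < \<bar>n\<bar> \<Longrightarrow> f n = 0"
  shows "Fs \<Phi> \<theta>' J (\<lambda>n. f (n - 1)) m = cis (2 * pi * (of_int m * \<Phi> + \<theta>')) * Fs \<Phi> \<theta>' J f m"
proof -
  define y where "y = of_int m * \<Phi> + \<theta>'"
  define h where "h k = cis (2 * pi * (of_int (k + 1) * y)) * f k" for k
  have hs: "\<And>n. J - 1 < \<bar>n\<bar> \<Longrightarrow> h n = 0" using assms by (simp add: h_def)
  have "Fs \<Phi> \<theta>' J (\<lambda>n. f (n - 1)) m = (\<Sum>n\<in>{-J..J}. h (n + -1))"
    unfolding Fs_def h_def y_def by simp
  also have "\<dots> = (\<Sum>n\<in>{-J..J}. h n)" by (rule sum_shift[OF hs]) (auto simp: abs_if)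
  also have "\<dots> = (\<Sum>n\<in>{-J..J}. cis (2 * pi * y) * (cis (2 * pi * (of_int n * y)) * f n))"
    unfolding h_def by (intro sum.cong refl) (simp add: cis_mult algebra_simps)
  also have "\<dots> = cis (2 * pi * y) * Fs \<Phi> \<theta>' J f m"
    unfolding Fs_def y_def by (simp add: sum_distrib_left)
  finally show ?thesis by (simp add: y_def)
qed

lemma Fs_shift_p1:
  assumes "\<And>n. J - 1 < \<bar>n\<bar> \<Longrightarrow> f n = 0"
  shows "Fs \<Phi> \<theta>' J (\<lambda>n. f (n + 1)) m = cis (- (2 * pi * (of_int m * \<Phi> + \<theta>'))) * Fs \<Phi> \<theta>' J f m"
proof -
  define y where "y = of_int m * \<Phi> + \<theta>'"
  define h where "h k = cis (2 * pi * (of_int (k - 1) * y)) * f k" for k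
  have hs: "\<And>n. J - 1 < \<bar>n\<bar> \<Longrightarrow> h n = 0" using assms by (simp add: h_def)
  have "Fs \<Phi> \<theta>' J (\<lambda>n. f (n + 1)) m = (\<Sum>n\<in>{-J..J}. h (n + 1))"
    unfolding Fs_def h_def y_def by simp
  also have "\<dots> = (\<Sum>n\<in>{-J..J}. h n)" by (rule sum_shift[OF hs]) (auto simp: abs_if)
  also have "\<dots> = (\<Sum>n\<in>{-J..J}. cis (- (2 * pi * y)) * (cis (2 * pi * (of_int n * y)) * f n))"
    unfolding h_def by (intro sum.cong refl) (simp add: cis_mult algebra_simps)
  also have "\<dots> = cis (- (2 * pi * y)) * Fs \<Phi> \<theta>' J f m"
    unfolding Fs_def y_def by (simp add: sum_distrib_left)
  finally show ?thesis by (simp add: y_def)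
qed

lemma cos_cis: "complex_of_real (cos x) = (cis x + cis (- x)) / 2"
  by (simp add: complex_eq_iff)

lemma sin_cis: "complex_of_real (sin x) = - \<i> / 2 * (cis x - cis (- x))"
  by (simp add: complex_eq_iff)

lemma Fs_cos:
  "Fs \<Phi> \<theta>' J (\<lambda>n. of_real (cos (2 * pi * (of_int n * \<Phi> + \<theta>))) * f n) m
   = 1 / 2 * (cis (2 * pi * \<theta>) * Fs \<Phi> \<theta>' J f (m + 1) + cis (- (2 * pi * \<theta>)) * Fs \<Phi> \<theta>' J f (m - 1))"
proof -
  have t: "cis (2 * pi * (of_int n * (of_int m * \<Phi> + \<theta>'))) * (of_real (cos (2 * pi * (of_int n * \<Phi> + \<theta>))) * f n)
     = 1 / 2 * (cis (2 * pi * \<theta>) * (cis (2 * pi * (of_int n * (of_int (m + 1) * \<Phi> + \<theta>'))) * f n)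
        + cis (- (2 * pi * \<theta>)) * (cis (2 * pi * (of_int n * (of_int (m - 1) * \<Phi> + \<theta>'))) * f n))" for n
  proof -
    have a1: "cis (2 * pi * (of_int n * (of_int m * \<Phi> + \<theta>'))) * cis (2 * pi * (of_int n * \<Phi> + \<theta>))
        = cis (2 * pi * \<theta>) * cis (2 * pi * (of_int n * (of_int (m + 1) * \<Phi> + \<theta>')))"
      unfolding cis_mult by (rule arg_cong[where f=cis]) (simp add: algebra_simps)
    have a2: "cis (2 * pi * (of_int n * (of_int m * \<Phi> + \<theta>'))) * cis (- (2 * pi * (of_int n * \<Phi> + \<theta>)))
        = cis (- (2 * pi * \<theta>)) * cis (2 * pi * (of_int n * (of_int (m - 1) * \<Phi> + \<theta>')))"
      unfolding cis_mult by (rule arg_cong[where f=cis]) (simp add: algebra_simps)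
    show ?thesis unfolding cos_cis using a1 a2 by (simp add: algebra_simps)
  qed
  show ?thesis unfolding Fs_def t by (simp add: sum.distrib sum_distrib_left algebra_simps)
qed

lemma Fs_sin:
  "Fs \<Phi> \<theta>' J (\<lambda>n. of_real (sin (2 * pi * (of_int n * \<Phi> + \<theta>))) * f n) m
   = - \<i> / 2 * (cis (2 * pi * \<theta>) * Fs \<Phi> \<theta>' J f (m + 1) - cis (- (2 * pi * \<theta>)) * Fs \<Phi> \<theta>' J f (m - 1))"
proof -
  define c1 where "c1 = - \<i> / 2 * cis (2 * pi * \<theta>)"
  define c2 where "c2 = \<i> / 2 * cis (- (2 * pi * \<theta>))"
  have t: "cis (2 * pi * (of_int n * (of_int m * \<Phi> + \<theta>'))) * (of_real (sin (2 * pi * (of_int n * \<Phi> + \<theta>))) * f n)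
     = c1 * (cis (2 * pi * (of_int n * (of_int (m + 1) * \<Phi> + \<theta>'))) * f n)
        + c2 * (cis (2 * pi * (of_int n * (of_int (m - 1) * \<Phi> + \<theta>'))) * f n)" for n
  proof -
    have a1: "cis (2 * pi * (of_int n * (of_int m * \<Phi> + \<theta>'))) * cis (2 * pi * (of_int n * \<Phi> + \<theta>))
        = cis (2 * pi * \<theta>) * cis (2 * pi * (of_int n * (of_int (m + 1) * \<Phi> + \<theta>')))"
      unfolding cis_mult by (rule arg_cong[where f=cis]) (simp add: algebra_simps)
    have a2: "cis (2 * pi * (of_int n * (of_int m * \<Phi> + \<theta>'))) * cis (- (2 * pi * (of_int n * \<Phi> + \<theta>)))
        = cis (- (2 * pi * \<theta>)) * cis (2 * pi * (of_int n * (of_int (m - 1) * \<Phi> + \<theta>')))"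
      unfolding cis_mult by (rule arg_cong[where f=cis]) (simp add: algebra_simps)
    show ?thesis unfolding sin_cis c1_def c2_def
      using a1 a2 by (simp add: algebra_simps)
  qed
  have "Fs \<Phi> \<theta>' J (\<lambda>n. of_real (sin (2 * pi * (of_int n * \<Phi> + \<theta>))) * f n) m
     = c1 * Fs \<Phi> \<theta>' J f (m + 1) + c2 * Fs \<Phi> \<theta>' J f (m - 1)"
    unfolding Fs_def t sum.distrib sum_distrib_left ..
  then show ?thesis by (simp add: c1_def c2_def algebra_simps)
qed

lemma cis_parts: "cis x = of_real (cos x) + \<i> * of_real (sin x)" "cnj (cis x) = of_real (cos x) - \<i> * of_real (sin x)"
  by (simp_all add: complex_eq_iff)

lemma I1:
  assumes lam: "lam \<in> {0..1}" and g: "\<And>n s. J - 1 < \<bar>n\<bar> \<Longrightarrow> g n s = 0"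
  shows "Qg (cc lam \<Phi> \<theta>') (ss lam \<Phi> \<theta>') (cpl lam) (Dp \<Phi> \<theta> \<theta>' J (Sg lam (- cpl lam) (-1) g)) = Dp \<Phi> \<theta> \<theta>' J g"
proof (intro ext)
  fix m s
  define x where "x = 2 * pi * (of_int m * \<Phi> + \<theta>')"
  define A where "A = Fs \<Phi> \<theta>' J (\<lambda>n. g n True) m"
  define B where "B = Fs \<Phi> \<theta>' J (\<lambda>n. g n False) m"
  define Y where "Y = cis x"
  define Gm where "Gm = cis (- (2 * pi * (of_int m * \<theta>)))"
  have e1: "(\<lambda>n. Sg lam (- cpl lam) (-1) g n True) = (\<lambda>n. of_real lam * g (n - 1) True + of_real (- cpl lam) * g n False)"
    by (simp add: Sg_def)
  have e2: "(\<lambda>n. Sg lam (- cpl lam) (-1) g n False) = (\<lambda>n. of_real lam * g (n + 1) False + of_real (cpl lam) * g n True)"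
    by (simp add: Sg_def)
  have s1: "Fs \<Phi> \<theta>' J (\<lambda>n. g (n - 1) True) m = Y * A"
    using Fs_shift_m1[of J "\<lambda>n. g n True"] g unfolding Y_def x_def A_def by blast
  have s2: "Fs \<Phi> \<theta>' J (\<lambda>n. g (n + 1) False) m = cnj Y * B"
    using Fs_shift_p1[of J "\<lambda>n. g n False"] g unfolding Y_def x_def B_def cis_cnj by blast
  have FT: "Fs \<Phi> \<theta>' J (\<lambda>n. Sg lam (- cpl lam) (-1) g n True) m = of_real lam * Y * A - of_real (cpl lam) * B"
    unfolding e1 Fs_add Fs_scale s1 by (simp add: A_def B_def)
  have FF: "Fs \<Phi> \<theta>' J (\<lambda>n. Sg lam (- cpl lam) (-1) g n False) m = of_real lam * cnj Y * B + of_real (cpl lam) * A"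
    unfolding e2 Fs_add Fs_scale s2 by (simp add: A_def B_def)
  have DT: "Dp \<Phi> \<theta> \<theta>' J (Sg lam (- cpl lam) (-1) g) m True
      = Gm * (cnj (of_real lam * Y * A - of_real (cpl lam) * B) - \<i> * cnj (of_real lam * cnj Y * B + of_real (cpl lam) * A))"
    unfolding Dp_def FT FF Gm_def by simp
  have DF: "Dp \<Phi> \<theta> \<theta>' J (Sg lam (- cpl lam) (-1) g) m False
      = Gm * (- \<i> * cnj (of_real lam * Y * A - of_real (cpl lam) * B) + cnj (of_real lam * cnj Y * B + of_real (cpl lam) * A))"
    unfolding Dp_def FT FF Gm_def by simp
  have RT: "Dp \<Phi> \<theta> \<theta>' J g m True = Gm * (cnj A - \<i> * cnj B)"
    unfolding Dp_def A_def B_def Gm_def by simp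
  have RF: "Dp \<Phi> \<theta> \<theta>' J g m False = Gm * (- \<i> * cnj A + cnj B)"
    unfolding Dp_def A_def B_def Gm_def by simp
  have ccm: "complex_of_real (cc lam \<Phi> \<theta>' m) = of_real lam * of_real (cos x)"
    by (simp add: cc_def x_def)
  have ssm: "complex_of_real (ss lam \<Phi> \<theta>' m) = of_real lam * of_real (sin x)"
    by (simp add: ss_def x_def)
  have h1: "Y = of_real (cos x) + \<i> * of_real (sin x)" "cnj Y = of_real (cos x) - \<i> * of_real (sin x)"
    unfolding Y_def by (rule cis_parts)+
  have h2: "complex_of_real (cos x) * of_real (cos x) + of_real (sin x) * of_real (sin x) = 1"
    by (metis of_real_1 of_real_add of_real_mult power2_eq_square sin_cos_squared_add2)
  have h3: "complex_of_real lam * of_real lam + of_real (cpl lam) * of_real (cpl lam) = 1"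
    using cpl_sq[OF lam] by (metis of_real_1 of_real_add of_real_mult power2_eq_square)
  have ii: "\<i> * \<i> = (-1::complex)" by simp
  have CT: "Qg (cc lam \<Phi> \<theta>') (ss lam \<Phi> \<theta>') (cpl lam) (Dp \<Phi> \<theta> \<theta>' J (Sg lam (- cpl lam) (-1) g)) m True = Dp \<Phi> \<theta> \<theta>' J g m True"
    unfolding Qg_def if_True DT DF RT ccm ssm
    apply (simp only: complex_cnj_diff complex_cnj_add complex_cnj_mult complex_cnj_complex_of_real complex_cnj_cnj complex_cnj_i complex_cnj_minus complex_cnj_divide complex_cnj_numeral complex_cnj_one)
    using h1 h2 h3 ii by algebra
  have CF: "Qg (cc lam \<Phi> \<theta>') (ss lam \<Phi> \<theta>') (cpl lam) (Dp \<Phi> \<theta> \<theta>' J (Sg lam (- cpl lam) (-1) g)) m False = Dp \<Phi> \<theta> \<theta>' J g m False"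
    unfolding Qg_def if_False bool.simps DT DF RF ccm ssm
    apply (simp only: complex_cnj_diff complex_cnj_add complex_cnj_mult complex_cnj_complex_of_real complex_cnj_cnj complex_cnj_i complex_cnj_minus complex_cnj_divide complex_cnj_numeral complex_cnj_one)
    using h1 h2 h3 ii by algebra
  show "Qg (cc lam \<Phi> \<theta>') (ss lam \<Phi> \<theta>') (cpl lam) (Dp \<Phi> \<theta> \<theta>' J (Sg lam (- cpl lam) (-1) g)) m s = Dp \<Phi> \<theta> \<theta>' J g m s"
    using CT CF by (cases s) auto
qed

lemma I2:
  assumes lam: "lam \<in> {0..1}"
  shows "Sg lam (- cpl lam) (-1) (Dp \<Phi> \<theta> \<theta>' J (Qg (cc lam \<Phi> \<theta>) (ss lam \<Phi> \<theta>) (cpl lam) \<psi>)) = Dp \<Phi> \<theta> \<theta>' J \<psi>"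
proof (intro ext)
  fix m s
  define A where "A k = Fs \<Phi> \<theta>' J (\<lambda>n. \<psi> n True) k" for k
  define B where "B k = Fs \<Phi> \<theta>' J (\<lambda>n. \<psi> n False) k" for k
  define a where "a k = cnj (A k)" for k
  define b where "b k = cnj (B k)" for k
  define T where "T = cis (2 * pi * \<theta>)"
  define Tb where "Tb = cis (- (2 * pi * \<theta>))"
  define G where "G k = cis (- (2 * pi * (of_int k * \<theta>)))" for k
  define la where "la = complex_of_real lam"
  define lp where "lp = complex_of_real (cpl lam)"
  define h where "h = (1 / 2 :: complex)"
  define q where "q = Qg (cc lam \<Phi> \<theta>) (ss lam \<Phi> \<theta>) (cpl lam) \<psi>"
  have qT: "(\<lambda>n. q n True) = (\<lambda>n. la * (of_real (cos (2 * pi * (of_int n * \<Phi> + \<theta>))) * \<psi> n True)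
      + (\<i> * lp) * \<psi> n True - la * (of_real (sin (2 * pi * (of_int n * \<Phi> + \<theta>))) * \<psi> n False))"
    by (simp add: q_def Qg_def cc_def ss_def la_def lp_def algebra_simps)
  have qF: "(\<lambda>n. q n False) = (\<lambda>n. la * (of_real (sin (2 * pi * (of_int n * \<Phi> + \<theta>))) * \<psi> n True)
      + la * (of_real (cos (2 * pi * (of_int n * \<Phi> + \<theta>))) * \<psi> n False) - (\<i> * lp) * \<psi> n False)"
    by (simp add: q_def Qg_def cc_def ss_def la_def lp_def algebra_simps)
  have FQT: "Fs \<Phi> \<theta>' J (\<lambda>n. q n True) k = la * (1 / 2 * (T * A (k + 1) + Tb * A (k - 1))) + (\<i> * lp) * A k
      - la * (- \<i> / 2 * (T * B (k + 1) - Tb * B (k - 1)))" for k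
    unfolding qT Fs_add Fs_diff Fs_scale Fs_cos Fs_sin A_def B_def T_def Tb_def ..
  have FQF: "Fs \<Phi> \<theta>' J (\<lambda>n. q n False) k = la * (- \<i> / 2 * (T * A (k + 1) - Tb * A (k - 1)))
      + la * (1 / 2 * (T * B (k + 1) + Tb * B (k - 1))) - (\<i> * lp) * B k" for k
    unfolding qF Fs_add Fs_diff Fs_scale Fs_cos Fs_sin A_def B_def T_def Tb_def ..
  have cT: "cnj T = Tb" "cnj Tb = T" by (simp_all add: T_def Tb_def cis_cnj)
  have cl: "cnj la = la" "cnj lp = lp" by (simp_all add: la_def lp_def)
  have h12: "(1 / 2 :: complex) = h" "- \<i> / 2 = - \<i> * h" by (simp_all add: h_def)
  have ch: "cnj h = h" by (simp add: h_def)
  have ii: "\<i> * \<i> = (-1::complex)" by simp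
  have cuT: "cnj (Fs \<Phi> \<theta>' J (\<lambda>n. q n True) k) = la * h * (Tb * a (k + 1) + T * a (k - 1)) - \<i> * lp * a k
        - \<i> * la * h * (Tb * b (k + 1) - T * b (k - 1))" for k
    unfolding FQT h12 a_def b_def
    apply (simp only: complex_cnj_diff complex_cnj_add complex_cnj_mult complex_cnj_i complex_cnj_minus cT cl ch)
    by (simp add: algebra_simps)
  have cuF: "cnj (Fs \<Phi> \<theta>' J (\<lambda>n. q n False) k) = \<i> * la * h * (Tb * a (k + 1) - T * a (k - 1))
        + la * h * (Tb * b (k + 1) + T * b (k - 1)) + \<i> * lp * b k" for k
    unfolding FQF h12 a_def b_def
    apply (simp only: complex_cnj_diff complex_cnj_add complex_cnj_mult complex_cnj_i complex_cnj_minus cT cl ch)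
    by (simp add: algebra_simps)
  have DqT: "Dp \<Phi> \<theta> \<theta>' J q k True = G k * (cnj (Fs \<Phi> \<theta>' J (\<lambda>n. q n True) k) - \<i> * cnj (Fs \<Phi> \<theta>' J (\<lambda>n. q n False) k))" for k
    by (simp add: Dp_def G_def)
  have DqF: "Dp \<Phi> \<theta> \<theta>' J q k False = G k * (- \<i> * cnj (Fs \<Phi> \<theta>' J (\<lambda>n. q n True) k) + cnj (Fs \<Phi> \<theta>' J (\<lambda>n. q n False) k))" for k
    by (simp add: Dp_def G_def)
  have RT: "Dp \<Phi> \<theta> \<theta>' J \<psi> m True = G m * (a m - \<i> * b m)"
    by (simp add: Dp_def G_def A_def B_def a_def b_def)
  have RF: "Dp \<Phi> \<theta> \<theta>' J \<psi> m False = G m * (- \<i> * a m + b m)"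
    by (simp add: Dp_def G_def A_def B_def a_def b_def)
  have Gm1: "G (m - 1) = G m * T" unfolding G_def T_def cis_mult by (rule arg_cong[where f=cis]) (simp add: algebra_simps)
  have Gp1: "G (m + 1) = G m * Tb" unfolding G_def Tb_def cis_mult by (rule arg_cong[where f=cis]) (simp add: algebra_simps)
  have TT: "T * Tb = 1" by (simp add: T_def Tb_def cis_mult)
  have ll: "la * la + lp * lp = 1" unfolding la_def lp_def
    using cpl_sq[OF lam] by (metis of_real_1 of_real_add of_real_mult power2_eq_square)
  have hh: "h * 2 = 1" by (simp add: h_def)
  have idx: "m - 1 + 1 = m" "m - 1 - 1 = m - 2" "m + 1 - 1 = m" "m + 1 + 1 = m + 2" by simp_all
  have ST: "Sg lam (- cpl lam) (-1) (Dp \<Phi> \<theta> \<theta>' J q) m True = la * Dp \<Phi> \<theta> \<theta>' J q (m - 1) True - lp * Dp \<Phi> \<theta> \<theta>' J q m False"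
    by (simp add: Sg_def la_def lp_def)
  have SF: "Sg lam (- cpl lam) (-1) (Dp \<Phi> \<theta> \<theta>' J q) m False = la * Dp \<Phi> \<theta> \<theta>' J q (m + 1) False + lp * Dp \<Phi> \<theta> \<theta>' J q m True"
    by (simp add: Sg_def la_def lp_def)
  have CT: "Sg lam (- cpl lam) (-1) (Dp \<Phi> \<theta> \<theta>' J q) m True = Dp \<Phi> \<theta> \<theta>' J \<psi> m True"
    unfolding ST RT DqT DqF cuT cuF Gm1 idx
    using TT ll ii hh by algebra
  have CF: "Sg lam (- cpl lam) (-1) (Dp \<Phi> \<theta> \<theta>' J q) m False = Dp \<Phi> \<theta> \<theta>' J \<psi> m False"
    unfolding SF RF DqT DqF cuT cuF Gp1 idx
    using TT ll ii hh by algebra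
  show "Sg lam (- cpl lam) (-1) (Dp \<Phi> \<theta> \<theta>' J (Qg (cc lam \<Phi> \<theta>) (ss lam \<Phi> \<theta>) (cpl lam) \<psi>)) m s = Dp \<Phi> \<theta> \<theta>' J \<psi> m s"
    using CT CF unfolding q_def by (cases s) auto
qed

lemma dual_key:
  assumes l1: "lam1 \<in> {0..1}" and l2: "lam2 \<in> {0..1}" and K: "supp_in K \<psi>" and J: "K + 2 \<le> J"
  shows "Wop lam2 lam1 \<Phi> \<theta>' (Dp \<Phi> \<theta> \<theta>' J (Wop lam1 lam2 \<Phi> \<theta> \<psi>)) = Dp \<Phi> \<theta> \<theta>' J \<psi>"
proof -
  define g where "g = Qg (cc lam2 \<Phi> \<theta>) (ss lam2 \<Phi> \<theta>) (cpl lam2) \<psi>"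
  have gs: "supp_in K g" unfolding g_def by (rule supp_Qg[OF K])
  have g0: "\<And>n s. J - 1 < \<bar>n\<bar> \<Longrightarrow> g n s = 0" using gs J unfolding supp_in_def by auto
  have "Wop lam2 lam1 \<Phi> \<theta>' (Dp \<Phi> \<theta> \<theta>' J (Wop lam1 lam2 \<Phi> \<theta> \<psi>))
      = Sg lam2 (- cpl lam2) (-1) (Qg (cc lam1 \<Phi> \<theta>') (ss lam1 \<Phi> \<theta>') (cpl lam1) (Dp \<Phi> \<theta> \<theta>' J (Sg lam1 (- cpl lam1) (-1) g)))"
    unfolding Wop_def SQ_def g_def ..
  also have "\<dots> = Sg lam2 (- cpl lam2) (-1) (Dp \<Phi> \<theta> \<theta>' J g)" using I1[OF l1 g0, where \<Phi>=\<Phi> and \<theta>=\<theta> and \<theta>'=\<theta>'] by simp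
  also have "\<dots> = Dp \<Phi> \<theta> \<theta>' J \<psi>" unfolding g_def by (rule I2[OF l2])
  finally show ?thesis .
qed

lemma Dp_lin: "Dp \<Phi> \<theta> \<theta>' J (\<lambda>n s. c * f n s + g n s) m s = cnj c * Dp \<Phi> \<theta> \<theta>' J f m s + Dp \<Phi> \<theta> \<theta>' J g m s"
  unfolding Dp_def Fs_add Fs_scale by (simp add: algebra_simps)

lemma norm_Fs: "cmod (Fs \<Phi> \<theta>' J f m) \<le> (\<Sum>n\<in>{-J..J}. cmod (f n))"
  unfolding Fs_def by (rule order_trans[OF norm_sum]) (simp add: norm_mult)

lemma norm_Dp: "cmod (Dp \<Phi> \<theta> \<theta>' J g m s) \<le> (\<Sum>n\<in>{-J..J}. cmod (g n True)) + (\<Sum>n\<in>{-J..J}. cmod (g n False))"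
proof -
  have a: "cmod (Fs \<Phi> \<theta>' J (\<lambda>n. g n True) m) \<le> (\<Sum>n\<in>{-J..J}. cmod (g n True))" by (rule norm_Fs)
  have b: "cmod (Fs \<Phi> \<theta>' J (\<lambda>n. g n False) m) \<le> (\<Sum>n\<in>{-J..J}. cmod (g n False))" by (rule norm_Fs)
  show ?thesis
  proof (cases s)
    case True
    have "cmod (Dp \<Phi> \<theta> \<theta>' J g m s) = cmod (cnj (Fs \<Phi> \<theta>' J (\<lambda>n. g n True) m) - \<i> * cnj (Fs \<Phi> \<theta>' J (\<lambda>n. g n False) m))"
      using True by (simp add: Dp_def norm_mult)
    also have "\<dots> \<le> cmod (Fs \<Phi> \<theta>' J (\<lambda>n. g n True) m) + cmod (Fs \<Phi> \<theta>' J (\<lambda>n. g n False) m)"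
      by (rule order_trans[OF norm_triangle_ineq4]) (simp add: norm_mult)
    finally show ?thesis using a b by linarith
  next
    case False
    have "cmod (Dp \<Phi> \<theta> \<theta>' J g m s) = cmod (- \<i> * cnj (Fs \<Phi> \<theta>' J (\<lambda>n. g n True) m) + cnj (Fs \<Phi> \<theta>' J (\<lambda>n. g n False) m))"
      using False by (simp add: Dp_def norm_mult)
    also have "\<dots> \<le> cmod (Fs \<Phi> \<theta>' J (\<lambda>n. g n True) m) + cmod (Fs \<Phi> \<theta>' J (\<lambda>n. g n False) m)"
      by (rule order_trans[OF norm_triangle_ineq]) (simp add: norm_mult)
    finally show ?thesis using a b by linarith
  qed
qed

lemma norm_W_pt:
  assumes l1: "lam1 \<in> {0..1}" and l2: "lam2 \<in> {0..1}" and B: "\<And>m s. cmod (g m s) \<le> Bd"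
  shows "cmod (Wop lam1 lam2 \<Phi> \<theta> g m s) \<le> 6 * Bd"
proof -
  have c1: "\<bar>cpl lam1\<bar> \<le> 1" "\<bar>lam1\<bar> \<le> 1" "\<bar>cpl lam2\<bar> \<le> 1"
    using cpl_sq[OF l1] cpl_sq[OF l2] l1 abs_le_square_iff[of "cpl lam1" 1] abs_le_square_iff[of "cpl lam2" 1]
    by (auto simp: power2_eq_square) (smt (verit) zero_le_mult_iff)+
  have ccb: "\<bar>cc lam2 \<Phi> \<theta> n\<bar> \<le> 1" "\<bar>ss lam2 \<Phi> \<theta> n\<bar> \<le> 1" for n
    using l2 by (auto simp: cc_def ss_def abs_mult intro: mult_le_one)
  have B0: "0 \<le> Bd" using B[of 0 True] norm_ge_zero order_trans by blast
  have q: "cmod (Qg (cc lam2 \<Phi> \<theta>) (ss lam2 \<Phi> \<theta>) (cpl lam2) g n t) \<le> 3 * Bd" for n t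
  proof -
    have "cmod (Qg (cc lam2 \<Phi> \<theta>) (ss lam2 \<Phi> \<theta>) (cpl lam2) g n t)
       \<le> (\<bar>cc lam2 \<Phi> \<theta> n\<bar> + \<bar>cpl lam2\<bar>) * Bd + \<bar>ss lam2 \<Phi> \<theta> n\<bar> * Bd"
    proof (cases t)
      case True
      have "cmod ((of_real (cc lam2 \<Phi> \<theta> n) + \<i> * of_real (cpl lam2)) * g n True - of_real (ss lam2 \<Phi> \<theta> n) * g n False)
          \<le> cmod (of_real (cc lam2 \<Phi> \<theta> n) + \<i> * of_real (cpl lam2)) * cmod (g n True) + \<bar>ss lam2 \<Phi> \<theta> n\<bar> * cmod (g n False)"
        by (rule order_trans[OF norm_triangle_ineq4]) (simp add: norm_mult)
      also have "\<dots> \<le> (\<bar>cc lam2 \<Phi> \<theta> n\<bar> + \<bar>cpl lam2\<bar>) * Bd + \<bar>ss lam2 \<Phi> \<theta> n\<bar> * Bd"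
      proof (intro add_mono mult_mono B)
        show "cmod (of_real (cc lam2 \<Phi> \<theta> n) + \<i> * of_real (cpl lam2)) \<le> \<bar>cc lam2 \<Phi> \<theta> n\<bar> + \<bar>cpl lam2\<bar>"
          by (rule order_trans[OF norm_triangle_ineq]) (simp add: norm_mult)
      qed (auto simp: B0)
      finally show ?thesis using True by (simp add: Qg_def)
    next
      case False
      have "cmod (of_real (ss lam2 \<Phi> \<theta> n) * g n True + (of_real (cc lam2 \<Phi> \<theta> n) - \<i> * of_real (cpl lam2)) * g n False)
          \<le> \<bar>ss lam2 \<Phi> \<theta> n\<bar> * cmod (g n True) + cmod (of_real (cc lam2 \<Phi> \<theta> n) - \<i> * of_real (cpl lam2)) * cmod (g n False)"
        by (rule order_trans[OF norm_triangle_ineq]) (simp add: norm_mult)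
      also have "\<dots> \<le> \<bar>ss lam2 \<Phi> \<theta> n\<bar> * Bd + (\<bar>cc lam2 \<Phi> \<theta> n\<bar> + \<bar>cpl lam2\<bar>) * Bd"
      proof (intro add_mono mult_mono B)
        show "cmod (of_real (cc lam2 \<Phi> \<theta> n) - \<i> * of_real (cpl lam2)) \<le> \<bar>cc lam2 \<Phi> \<theta> n\<bar> + \<bar>cpl lam2\<bar>"
          by (rule order_trans[OF norm_triangle_ineq4]) (simp add: norm_mult)
      qed (auto simp: B0)
      finally show ?thesis using False by (simp add: Qg_def algebra_simps)
    qed
    also have "\<dots> \<le> (1 + 1) * Bd + 1 * Bd"
      using ccb[of n] c1 B0 by (intro add_mono mult_right_mono) auto
    finally show ?thesis by simp
  qed
  define u where "u = Qg (cc lam2 \<Phi> \<theta>) (ss lam2 \<Phi> \<theta>) (cpl lam2) g"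
  have "cmod (Wop lam1 lam2 \<Phi> \<theta> g m s) \<le> \<bar>lam1\<bar> * (3 * Bd) + \<bar>cpl lam1\<bar> * (3 * Bd)"
  proof (cases s)
    case True
    have "cmod (Wop lam1 lam2 \<Phi> \<theta> g m s) = cmod (of_real lam1 * u (m - 1) True - of_real (cpl lam1) * u m False)"
      using True by (simp add: Wop_def SQ_def Sg_def u_def)
    also have "\<dots> \<le> \<bar>lam1\<bar> * cmod (u (m - 1) True) + \<bar>cpl lam1\<bar> * cmod (u m False)"
      by (rule order_trans[OF norm_triangle_ineq4]) (simp add: norm_mult)
    also have "\<dots> \<le> \<bar>lam1\<bar> * (3 * Bd) + \<bar>cpl lam1\<bar> * (3 * Bd)"
      using q unfolding u_def by (intro add_mono mult_left_mono) auto
    finally show ?thesis .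
  next
    case False
    have "cmod (Wop lam1 lam2 \<Phi> \<theta> g m s) = cmod (of_real lam1 * u (m + 1) False + of_real (cpl lam1) * u m True)"
      using False by (simp add: Wop_def SQ_def Sg_def u_def)
    also have "\<dots> \<le> \<bar>lam1\<bar> * cmod (u (m + 1) False) + \<bar>cpl lam1\<bar> * cmod (u m True)"
      by (rule order_trans[OF norm_triangle_ineq]) (simp add: norm_mult)
    also have "\<dots> \<le> \<bar>lam1\<bar> * (3 * Bd) + \<bar>cpl lam1\<bar> * (3 * Bd)"
      using q unfolding u_def by (intro add_mono mult_left_mono) auto
    finally show ?thesis .
  qed
  also have "\<dots> \<le> 1 * (3 * Bd) + 1 * (3 * Bd)"
    using c1 B0 by (intro add_mono mult_right_mono) auto
  finally show ?thesis by simp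
qed

lemma root_sum:
  fixes d :: int and N :: nat
  assumes N: "0 < N" and d: "\<bar>d\<bar> < int N"
  shows "(\<Sum>j<N. cis (2 * pi * (of_int d * of_nat j / of_nat N))) = (if d = 0 then of_nat N else 0)"
proof (cases "d = 0")
  case True then show ?thesis by simp
next
  case False
  define w where "w = cis (2 * pi * of_int d / of_nat N)"
  have tj: "cis (2 * pi * (of_int d * of_nat j / of_nat N)) = w ^ j" for j
  proof -
    have "w ^ j = cis (real j * (2 * pi * of_int d / of_nat N))" unfolding w_def by (rule Complex.DeMoivre)
    also have "\<dots> = cis (2 * pi * (of_int d * of_nat j / of_nat N))" by (rule arg_cong[where f=cis]) (simp add: field_simps)
    finally show ?thesis by simp
  qed
  have wN: "w ^ N = 1"
  proof -
    have "w ^ N = cis (real N * (2 * pi * of_int d / of_nat N))" unfolding w_def by (rule Complex.DeMoivre)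
    also have "real N * (2 * pi * of_int d / of_nat N) = 2 * pi * of_int d" using N by simp
    also have "cis (2 * pi * of_int d) = 1" by (rule cis_multiple_2pi) simp
    finally show ?thesis .
  qed
  have w1: "w \<noteq> 1"
  proof
    assume "w = 1"
    then have "cos (2 * pi * of_int d / of_nat N) = 1" unfolding w_def by (metis cis.sel(1) one_complex.sel(1))
    then obtain k :: int where k: "2 * pi * of_int d / of_nat N = of_int k * 2 * pi" by (auto simp: cos_one_2pi_int)
    then have "real_of_int d = of_int k * of_nat N" using N by (simp add: field_simps)
    then have dk: "d = k * int N" by (metis of_int_eq_iff of_int_mult of_int_of_nat_eq)
    show False
    proof (cases "k = 0")
      case True then show False using dk False by simp
    next
      case False
      then have "1 \<le> \<bar>k\<bar>" by simp
      then have "int N \<le> \<bar>k\<bar> * int N" using N by simp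
      also have "\<dots> = \<bar>d\<bar>" using dk by (simp add: abs_mult)
      finally show False using d by simp
    qed
  qed
  have "(\<Sum>j<N. cis (2 * pi * (of_int d * of_nat j / of_nat N))) = (\<Sum>j<N. w ^ j)" unfolding tj ..
  also have "\<dots> = 0" using w1 wN by (simp add: sum_gp_strict)
  finally show ?thesis using False by simp
qed

lemma parseval:
  fixes b :: "int \<Rightarrow> complex" and N :: nat
  assumes N: "2 * J < int N" and J0: "0 \<le> J"
  shows "(\<Sum>j<N. (cmod (\<Sum>n\<in>{-J..J}. cis (2 * pi * (of_int n * of_nat j / of_nat N)) * b n))\<^sup>2)
       = real N * (\<Sum>n\<in>{-J..J}. (cmod (b n))\<^sup>2)"
proof -
  have N0: "0 < N" using N J0 by linarith
  define c where "c j n = cis (2 * pi * (of_int n * of_nat j / of_nat N))" for j :: nat and n :: int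
  have cc: "c j n * cnj (c j n') = cis (2 * pi * (of_int (n - n') * of_nat j / of_nat N))" for j n n'
    unfolding c_def cis_cnj cis_mult by (rule arg_cong[where f=cis]) (use N0 in \<open>simp add: field_simps\<close>)
  have "complex_of_real (\<Sum>j<N. (cmod (\<Sum>n\<in>{-J..J}. c j n * b n))\<^sup>2)
      = (\<Sum>j<N. (\<Sum>n\<in>{-J..J}. c j n * b n) * cnj (\<Sum>n\<in>{-J..J}. c j n * b n))"
    unfolding of_real_sum complex_norm_square ..
  also have "\<dots> = (\<Sum>j<N. \<Sum>n\<in>{-J..J}. \<Sum>n'\<in>{-J..J}. b n * cnj (b n') * (c j n * cnj (c j n')))"
    by (simp add: cnj_sum sum_product algebra_simps)
  also have "\<dots> = (\<Sum>n\<in>{-J..J}. \<Sum>n'\<in>{-J..J}. b n * cnj (b n') * (\<Sum>j<N. c j n * cnj (c j n')))"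
    by (simp add: sum_distrib_left sum.swap[of _ "{..<N}"])
  also have "\<dots> = (\<Sum>n\<in>{-J..J}. \<Sum>n'\<in>{-J..J}. b n * cnj (b n') * (if n = n' then of_nat N else 0))"
  proof (intro sum.cong refl)
    fix n n' assume "n \<in> {-J..J}" "n' \<in> {-J..J}"
    then have "\<bar>n - n'\<bar> < int N" using N by auto
    then show "b n * cnj (b n') * (\<Sum>j<N. c j n * cnj (c j n')) = b n * cnj (b n') * (if n = n' then of_nat N else 0)"
      unfolding cc using root_sum[OF N0, of "n - n'"] by simp
  qed
  also have "\<dots> = (\<Sum>n\<in>{-J..J}. of_nat N * (b n * cnj (b n)))"
    by (simp add: if_distrib[of "\<lambda>x. b _ * cnj (b _) * x"] sum.delta cong: if_cong) (simp add: algebra_simps)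
  also have "\<dots> = complex_of_real (real N * (\<Sum>n\<in>{-J..J}. (cmod (b n))\<^sup>2))"
    unfolding of_real_mult of_real_sum complex_norm_square[symmetric] sum_distrib_left by simp
  finally show ?thesis unfolding c_def of_real_eq_iff .
qed

lemma sq_pair: "(cmod (cnj x - \<i> * cnj y))\<^sup>2 + (cmod (- \<i> * cnj x + cnj y))\<^sup>2 = 2 * ((cmod x)\<^sup>2 + (cmod y)\<^sup>2)"
  unfolding cmod_power2 by (simp add: power2_eq_square algebra_simps)

lemma sq_Dp: "sq (Dp \<Phi> \<theta> \<theta>' J g) m = 2 * ((cmod (Fs \<Phi> \<theta>' J (\<lambda>n. g n True) m))\<^sup>2 + (cmod (Fs \<Phi> \<theta>' J (\<lambda>n. g n False) m))\<^sup>2)"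
proof -
  have e: "(cmod (cnj x - \<i> * cnj y))\<^sup>2 + (cmod (cnj y - \<i> * cnj x))\<^sup>2 = 2 * (cmod x)\<^sup>2 + 2 * (cmod y)\<^sup>2" for x y
    unfolding cmod_power2 by (simp add: power2_eq_square algebra_simps)
  show ?thesis unfolding sq_def Dp_def by (simp add: norm_mult e)
qed

lemma Fs_grid: "Fs \<Phi> (of_nat j / of_nat N) J f m
   = (\<Sum>n\<in>{-J..J}. cis (2 * pi * (of_int n * of_nat j / of_nat N)) * (cis (2 * pi * (of_int n * (of_int m * \<Phi>))) * f n))"
  unfolding Fs_def
proof (intro sum.cong refl)
  fix n
  have "cis (2 * pi * (of_int n * (of_int m * \<Phi> + of_nat j / of_nat N)))
      = cis (2 * pi * (of_int n * of_nat j / of_nat N)) * cis (2 * pi * (of_int n * (of_int m * \<Phi>)))"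
    unfolding cis_mult by (rule arg_cong[where f=cis]) (simp add: algebra_simps)
  then show "cis (2 * pi * (of_int n * (of_int m * \<Phi> + of_nat j / of_nat N))) * f n
      = cis (2 * pi * (of_int n * of_nat j / of_nat N)) * (cis (2 * pi * (of_int n * (of_int m * \<Phi>))) * f n)"
    by simp
qed

lemma avg_Fs:
  assumes "2 * J < int N" "0 \<le> J"
  shows "(\<Sum>j<N. (cmod (Fs \<Phi> (of_nat j / of_nat N) J f m))\<^sup>2) = real N * (\<Sum>n\<in>{-J..J}. (cmod (f n))\<^sup>2)"
  unfolding Fs_grid parseval[OF assms] by (simp add: norm_mult)

lemma avg_Dp:
  assumes "2 * J < int N" "0 \<le> J"
  shows "(\<Sum>j<N. sq (Dp \<Phi> \<theta> (of_nat j / of_nat N) J g) m) = 2 * real N * (\<Sum>n\<in>{-J..J}. sq g n)"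
  unfolding sq_Dp sum_distrib_left[symmetric] sum.distrib avg_Fs[OF assms]
  by (simp add: sq_def sum.distrib algebra_simps)

lemma avg_Dp_window:
  assumes "2 * J < int N" "0 \<le> J" "0 \<le> L"
  shows "(\<Sum>j<N. \<Sum>m\<in>{-L..L}. sq (Dp \<Phi> \<theta> (of_nat j / of_nat N) J g) m)
      = (2 * L + 1) * (2 * real N * (\<Sum>n\<in>{-J..J}. sq g n))"
proof -
  have "(\<Sum>j<N. \<Sum>m\<in>{-L..L}. sq (Dp \<Phi> \<theta> (of_nat j / of_nat N) J g) m)
      = (\<Sum>m\<in>{-L..L}. \<Sum>j<N. sq (Dp \<Phi> \<theta> (of_nat j / of_nat N) J g) m)"
    by (rule sum.swap)
  also have "\<dots> = (\<Sum>m\<in>{-L..L}. 2 * real N * (\<Sum>n\<in>{-J..J}. sq g n))"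
    unfolding avg_Dp[OF assms(1,2)] ..
  also have "\<dots> = real (card {-L..L}) * (2 * real N * (\<Sum>n\<in>{-J..J}. sq g n))" by simp
  also have "real (card {-L..L}) = of_int (2 * L + 1)" using assms(3) by simp
  finally show ?thesis by simp
qed

lemma transfer_ap:
  fixes lam1 lam2 \<Phi> \<theta> e :: real and z :: complex and \<psi> :: state and K :: int
  assumes l1: "lam1 \<in> {0..1}" and l2: "lam2 \<in> {0..1}" and z1: "cmod z = 1" and e0: "0 < e"
    and K: "supp_in K \<psi>" and K0: "0 \<le> K" and P0: "0 < l2norm \<psi>"
    and err: "l2norm (\<lambda>n s. Wop lam1 lam2 \<Phi> \<theta> \<psi> n s - z * \<psi> n s) \<le> e * l2norm \<psi>"
  shows "\<exists>\<theta>'\<in>{0..1}. \<exists>\<xi> L. supp_in L \<xi> \<and> \<xi> \<noteq> (\<lambda>n s. 0) \<and>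
           l2norm (\<lambda>n s. Wop lam2 lam1 \<Phi> \<theta>' \<xi> n s - z * \<xi> n s) \<le> 2 * e * l2norm \<xi>"
proof -
  interpret A: lams lam1 lam2 using l1 l2 by unfold_locales
  interpret B: lams lam2 lam1 using l1 l2 by unfold_locales
  define J where "J = K + 2"
  define \<phi> where "\<phi> = Wop lam1 lam2 \<Phi> \<theta> \<psi>"
  define r where "r = (\<lambda>n s. \<phi> n s - z * \<psi> n s)"
  define P where "P = l2norm \<psi>"
  have J0: "0 \<le> J" "K + 2 \<le> J" "K + 1 \<le> J" "K \<le> J" using K0 by (auto simp: J_def)
  have \<phi>s: "supp_in (K + 1) \<phi>" unfolding \<phi>_def by (rule A.W_supp[OF K])
  have rs: "supp_in (K + 1) r" using \<phi>s K unfolding r_def supp_in_def by auto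
  have PK: "P = wn K \<psi>" unfolding P_def by (rule supp_l2(2)[OF K])
  have ws\<psi>: "(\<Sum>n\<in>{-J..J}. sq \<psi> n) = P\<^sup>2"
    unfolding PK wn_sq using ws_supp[OF K J0(4)] by simp
  have ws\<phi>: "(\<Sum>n\<in>{-J..J}. sq \<phi> n) = P\<^sup>2"
  proof -
    have "wn J \<phi> = wn J \<psi>" unfolding \<phi>_def by (rule A.W_wn[OF K J0(3)])
    also have "\<dots> = wn K \<psi>" by (rule wn_supp[OF K J0(4)])
    finally show ?thesis using PK wn_sq[of J \<phi>] by simp
  qed
  have wsr: "(\<Sum>n\<in>{-J..J}. sq r n) \<le> e\<^sup>2 * P\<^sup>2"
  proof -
    have "l2norm r = wn (K + 1) r" by (rule supp_l2(2)[OF rs])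
    also have "\<dots> = wn J r" using wn_supp[OF rs J0(3)] by simp
    finally have "wn J r \<le> e * P" using err unfolding r_def \<phi>_def P_def by simp
    then have "(wn J r)\<^sup>2 \<le> (e * P)\<^sup>2" by (rule power_mono) simp
    then show ?thesis unfolding wn_sq by (simp add: power_mult_distrib)
  qed
  have P0': "0 < P" using P0 by (simp add: P_def)
  define Bc where "Bc = (\<Sum>n\<in>{-J..J}. cmod (\<phi> n True)) + (\<Sum>n\<in>{-J..J}. cmod (\<phi> n False))"
  have Bc0: "0 \<le> Bc" unfolding Bc_def by (intro add_nonneg_nonneg sum_nonneg) auto
  define C where "C = 98 * Bc\<^sup>2"
  have C0: "0 \<le> C" by (simp add: C_def)
  define L where "L = \<lceil>4 * C / (e\<^sup>2 * P\<^sup>2)\<rceil> + 1"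
  have eP: "0 < e\<^sup>2 * P\<^sup>2" using e0 P0' by simp
  have "0 \<le> 4 * C / (e\<^sup>2 * P\<^sup>2)" using C0 eP by simp
  then have "0 \<le> \<lceil>4 * C / (e\<^sup>2 * P\<^sup>2)\<rceil>" by simp
  then have L1: "1 \<le> L" unfolding L_def by simp
  have Lbig: "4 * C < 6 * (2 * of_int L + 1) * (e\<^sup>2 * P\<^sup>2)"
  proof -
    have "4 * C / (e\<^sup>2 * P\<^sup>2) \<le> of_int L" unfolding L_def by linarith
    then have "4 * C \<le> of_int L * (e\<^sup>2 * P\<^sup>2)" using eP by (simp add: field_simps)
    also have "\<dots> < 6 * (2 * of_int L + 1) * (e\<^sup>2 * P\<^sup>2)"
      by (rule mult_strict_right_mono[OF _ eP]) (use L1 in simp)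
    finally show ?thesis .
  qed
  define N where "N = nat (2 * J + 1)"
  have N: "2 * J < int N" "0 < N" using J0 by (auto simp: N_def)
  define th where "th j = of_nat j / (of_nat N :: real)" for j :: nat
  define W2 where "W2 j = Wop lam2 lam1 \<Phi> (th j)" for j
  define \<xi> where "\<xi> j = Dp \<Phi> \<theta> (th j) J \<phi>" for j
  define \<rho> where "\<rho> j = Dp \<Phi> \<theta> (th j) J r" for j
  define \<xi>L where "\<xi>L j = trunc L (\<xi> j)" for j
  define D where "D j = (\<lambda>n s. W2 j (\<xi>L j) n s - z * \<xi>L j n s)" for j
  define X where "X j = (\<Sum>m\<in>{-L..L}. sq (\<rho> j) m)" for j
  define Y where "Y j = (\<Sum>m\<in>{-L..L}. sq (\<xi> j) m)" for j
  have zz: "z * cnj z = 1"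
    using complex_norm_square[of z] z1 by simp
  have key: "W2 j (\<xi> j) m s - z * \<xi> j m s = - z * \<rho> j m s" for j m s
  proof -
    have dk: "W2 j (\<xi> j) = Dp \<Phi> \<theta> (th j) J \<psi>"
      unfolding W2_def \<xi>_def \<phi>_def by (rule dual_key[OF l1 l2 K J0(2)])
    have \<phi>eq: "\<phi> = (\<lambda>n s. z * \<psi> n s + r n s)" by (simp add: r_def)
    have "\<xi> j m s = cnj z * Dp \<Phi> \<theta> (th j) J \<psi> m s + \<rho> j m s"
      unfolding \<xi>_def \<rho>_def by (subst \<phi>eq) (rule Dp_lin)
    then have "W2 j (\<xi> j) m s - z * \<xi> j m s = (1 - z * cnj z) * Dp \<Phi> \<theta> (th j) J \<psi> m s - z * \<rho> j m s"
      using dk by (simp add: algebra_simps)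
    then show ?thesis using zz by simp
  qed
  have bxi: "cmod (\<xi>L j m s) \<le> Bc" for j m s
    unfolding \<xi>L_def trunc_def \<xi>_def Bc_def using norm_Dp[of \<Phi> \<theta> "th j" J \<phi> m s] Bc0 Bc_def by auto
  have bD: "sq (D j) m \<le> C" for j m
  proof -
    have c: "cmod (D j m s) \<le> 7 * Bc" for s
    proof -
      have a: "cmod (W2 j (\<xi>L j) m s) \<le> 6 * Bc" unfolding W2_def by (rule norm_W_pt[OF l2 l1 bxi])
      have b: "cmod (z * \<xi>L j m s) \<le> Bc" using bxi[of j m s] z1 by (simp add: norm_mult)
      have "cmod (D j m s) \<le> cmod (W2 j (\<xi>L j) m s) + cmod (z * \<xi>L j m s)"
        unfolding D_def by (rule norm_triangle_ineq4)
      then show ?thesis using a b by linarith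
    qed
    have c2: "(cmod (D j m s))\<^sup>2 \<le> 49 * Bc\<^sup>2" for s
    proof -
      have "(cmod (D j m s))\<^sup>2 \<le> (7 * Bc)\<^sup>2" by (rule power_mono[OF c]) simp
      then show ?thesis by (simp add: power_mult_distrib)
    qed
    show ?thesis unfolding sq_def C_def using c2[of True] c2[of False] by linarith
  qed
  have inner: "sq (D j) m = sq (\<rho> j) m" if "\<bar>m\<bar> \<le> L - 1" for j m
  proof -
    have "D j m s = - z * \<rho> j m s" for s
    proof -
      have "\<forall>s'. \<xi>L j (m-1) s' = \<xi> j (m-1) s' \<and> \<xi>L j m s' = \<xi> j m s' \<and> \<xi>L j (m+1) s' = \<xi> j (m+1) s'"
      proof -
        have "\<bar>m - 1\<bar> \<le> L" "\<bar>m\<bar> \<le> L" "\<bar>m + 1\<bar> \<le> L" using that by arith+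
        then show ?thesis by (simp add: \<xi>L_def trunc_def)
      qed
      then have "W2 j (\<xi>L j) m s = W2 j (\<xi> j) m s"
        using B.W_loc1 unfolding loc1_def W2_def by blast
      moreover have "\<xi>L j m s = \<xi> j m s" using that by (simp add: \<xi>L_def trunc_def)
      ultimately show ?thesis unfolding D_def using key by simp
    qed
    then show ?thesis unfolding sq_def using z1 by (simp add: norm_mult)
  qed
  have Ebound: "(\<Sum>m\<in>{-(L+1)..L+1}. sq (D j) m) \<le> X j + 4 * C" for j
  proof -
    define Bs where "Bs = {-(L+1), -L, L, L+1}"
    have pt: "sq (D j) m \<le> (if m \<in> {-L..L} then sq (\<rho> j) m else 0) + (if m \<in> Bs then C else 0)"
      if "m \<in> {-(L+1)..L+1}" for m
    proof (cases "\<bar>m\<bar> \<le> L - 1")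
      case True
      then show ?thesis using inner[OF True] C0 by auto
    next
      case False
      then have "m \<in> Bs" using that by (auto simp: Bs_def)
      then have "(if m \<in> Bs then C else 0) = C" by simp
      moreover have "0 \<le> (if m \<in> {-L..L} then sq (\<rho> j) m else 0)" by simp
      ultimately show ?thesis using bD[of j m] by linarith
    qed
    have "(\<Sum>m\<in>{-(L+1)..L+1}. sq (D j) m)
        \<le> (\<Sum>m\<in>{-(L+1)..L+1}. (if m \<in> {-L..L} then sq (\<rho> j) m else 0) + (if m \<in> Bs then C else 0))"
      by (rule sum_mono) (rule pt)
    also have "\<dots> = (\<Sum>m\<in>{-(L+1)..L+1}. (if m \<in> {-L..L} then sq (\<rho> j) m else 0)) + (\<Sum>m\<in>{-(L+1)..L+1}. (if m \<in> Bs then C else 0))"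
      by (rule sum.distrib)
    also have "(\<Sum>m\<in>{-(L+1)..L+1}. (if m \<in> {-L..L} then sq (\<rho> j) m else 0)) = X j"
      unfolding X_def by (rule sum_window_restrict[symmetric]) simp
    also have "(\<Sum>m\<in>{-(L+1)..L+1}. (if m \<in> Bs then C else 0)) = C * real (card Bs)"
    proof -
      have "(\<Sum>m\<in>{-(L+1)..L+1}. (if m \<in> Bs then C else 0)) = sum (\<lambda>m. C) ({-(L+1)..L+1} \<inter> Bs)"
        by (rule sum.inter_restrict[symmetric]) simp
      also have "{-(L+1)..L+1} \<inter> Bs = Bs" using L1 by (auto simp: Bs_def)
      finally show ?thesis by simp
    qed
    also have "card Bs = 4" using L1 by (simp add: Bs_def)
    finally show ?thesis by simp
  qed
  have Dsupp: "supp_in (L + 1) (D j)" for j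
  proof -
    have a: "supp_in (L + 1) (W2 j (\<xi>L j))" unfolding W2_def \<xi>L_def by (rule B.W_supp[OF supp_trunc])
    have b: "supp_in (L + 1) (\<xi>L j)" using supp_trunc[of L "\<xi> j"] unfolding \<xi>L_def supp_in_def by auto
    show ?thesis using a b unfolding D_def supp_in_def by auto
  qed
  have Eeq: "(l2norm (D j))\<^sup>2 = (\<Sum>m\<in>{-(L+1)..L+1}. sq (D j) m)" for j
    using supp_l2(2)[OF Dsupp] wn_sq by simp
  have Yeq: "(l2norm (\<xi>L j))\<^sup>2 = Y j" for j
  proof -
    have "l2norm (\<xi>L j) = wn L (\<xi>L j)" unfolding \<xi>L_def by (rule supp_l2(2)[OF supp_trunc])
    also have "\<dots> = wn L (\<xi> j)" unfolding \<xi>L_def by (rule wn_trunc)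
    finally show ?thesis unfolding Y_def using wn_sq by simp
  qed
  have sumX: "(\<Sum>j<N. X j) = (2 * L + 1) * (2 * real N * (\<Sum>n\<in>{-J..J}. sq r n))"
    unfolding X_def \<rho>_def th_def using avg_Dp_window[OF N(1) J0(1), of L \<Phi> \<theta> r] L1 by simp
  have sumY: "(\<Sum>j<N. Y j) = (2 * L + 1) * (2 * real N * P\<^sup>2)"
    unfolding Y_def \<xi>_def th_def ws\<phi>[symmetric] using avg_Dp_window[OF N(1) J0(1), of L \<Phi> \<theta> \<phi>] L1 by simp
  have "(\<Sum>j<N. X j + 4 * C - 4 * e\<^sup>2 * Y j) = (\<Sum>j<N. X j) + real N * (4 * C) - 4 * e\<^sup>2 * (\<Sum>j<N. Y j)"
    by (simp add: sum.distrib sum_subtractf sum_distrib_left)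
  also have "\<dots> \<le> (2 * L + 1) * (2 * real N * (e\<^sup>2 * P\<^sup>2)) + real N * (4 * C) - 4 * e\<^sup>2 * ((2 * L + 1) * (2 * real N * P\<^sup>2))"
    unfolding sumX sumY using wsr L1 by (intro diff_right_mono add_right_mono mult_left_mono) auto
  also have "\<dots> = real N * (4 * C - 6 * (2 * of_int L + 1) * (e\<^sup>2 * P\<^sup>2))" by (simp add: algebra_simps)
  also have "\<dots> < 0" using N(2) Lbig by (simp add: mult_pos_neg)
  finally have neg: "(\<Sum>j<N. X j + 4 * C - 4 * e\<^sup>2 * Y j) < 0" .
  then obtain j where j: "j < N" "X j + 4 * C - 4 * e\<^sup>2 * Y j < 0"
    by (metis (no_types, lifting) lessThan_iff not_le sum_nonneg)
  have lt: "(l2norm (D j))\<^sup>2 < (2 * e * l2norm (\<xi>L j))\<^sup>2"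
    using Eeq[of j] Ebound[of j] Yeq[of j] j(2) by (simp add: power_mult_distrib)
  then have lt2: "l2norm (D j) < 2 * e * l2norm (\<xi>L j)"
    by (rule power_less_imp_less_base) (use e0 in simp)
  have ne: "\<xi>L j \<noteq> (\<lambda>n s. 0)"
  proof
    assume "\<xi>L j = (\<lambda>n s. 0)"
    then have "l2norm (\<xi>L j) = 0" using l2_zero by simp
    then show False using lt by simp
  qed
  have th01: "th j \<in> {0..1}" using j(1) by (simp add: th_def)
  show ?thesis
    using th01 supp_trunc[of L "\<xi> j"] ne lt2 unfolding D_def W2_def \<xi>L_def
    by (intro bexI[of _ "th j"] exI[of _ "trunc L (\<xi> j)"] exI[of _ L]) auto
qed

lemma cos_lip: "\<bar>cos w - cos z\<bar> \<le> \<bar>w - z\<bar>" for w z :: real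
proof -
  have "\<bar>cos w - cos z\<bar> = 2 * \<bar>sin ((w + z) / 2)\<bar> * \<bar>sin ((z - w) / 2)\<bar>"
    unfolding cos_diff_cos by (simp add: abs_mult)
  also have "\<dots> \<le> 2 * 1 * \<bar>(z - w) / 2\<bar>"
    by (intro mult_mono abs_sin_x_le_abs_x) auto
  finally show ?thesis by simp
qed

lemma sin_lip: "\<bar>sin w - sin z\<bar> \<le> \<bar>w - z\<bar>" for w z :: real
proof -
  have "\<bar>sin w - sin z\<bar> = 2 * \<bar>sin ((w - z) / 2)\<bar> * \<bar>cos ((w + z) / 2)\<bar>"
    unfolding sin_diff_sin by (simp add: abs_mult)
  also have "\<dots> \<le> 2 * \<bar>(w - z) / 2\<bar> * 1"
    by (intro mult_mono abs_sin_x_le_abs_x) auto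
  finally show ?thesis by simp
qed

lemma Sg_diff: "Sg a b p (\<lambda>n s. f n s - g n s) = (\<lambda>n s. Sg a b p f n s - Sg a b p g n s)"
  by (intro ext) (simp add: Sg_def algebra_simps)

lemma W_lip:
  assumes l1: "lam1 \<in> {0..1}" and l2: "lam2 \<in> {0..1}" and L: "supp_in L \<xi>"
  shows "l2norm (\<lambda>n s. Wop lam1 lam2 \<Phi> a \<xi> n s - Wop lam1 lam2 \<Phi> b \<xi> n s) \<le> 4 * pi * \<bar>a - b\<bar> * l2norm \<xi>"
proof -
  define d where "d = 2 * pi * \<bar>a - b\<bar>"
  have d0: "0 \<le> d" by (simp add: d_def)
  define u where "u = (\<lambda>n s. Qg (cc lam2 \<Phi> a) (ss lam2 \<Phi> a) (cpl lam2) \<xi> n s - Qg (cc lam2 \<Phi> b) (ss lam2 \<Phi> b) (cpl lam2) \<xi> n s)"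
  have eq: "(\<lambda>n s. Wop lam1 lam2 \<Phi> a \<xi> n s - Wop lam1 lam2 \<Phi> b \<xi> n s) = Sg lam1 (- cpl lam1) (-1) u"
    unfolding u_def Sg_diff Wop_def SQ_def ..
  have us: "supp_in L u" using L unfolding u_def supp_in_def Qg_def by auto
  define dc where "dc n = cc lam2 \<Phi> a n - cc lam2 \<Phi> b n" for n
  define ds where "ds n = ss lam2 \<Phi> a n - ss lam2 \<Phi> b n" for n
  have dcb: "\<bar>dc n\<bar> \<le> d" and dsb: "\<bar>ds n\<bar> \<le> d" for n
  proof -
    have l: "\<bar>lam2\<bar> \<le> 1" using l2 by auto
    define A where "A = 2 * pi * (of_int n * \<Phi> + a)"
    define B where "B = 2 * pi * (of_int n * \<Phi> + b)"
    have AB: "\<bar>A - B\<bar> = d"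
    proof -
      have "A - B = 2 * pi * (a - b)" by (simp add: A_def B_def algebra_simps)
      then show ?thesis by (simp add: d_def abs_mult)
    qed
    have "dc n = lam2 * (cos A - cos B)" by (simp add: dc_def cc_def A_def B_def right_diff_distrib)
    then have "\<bar>dc n\<bar> = \<bar>lam2\<bar> * \<bar>cos A - cos B\<bar>" by (simp add: abs_mult)
    also have "\<dots> \<le> 1 * \<bar>A - B\<bar>" by (rule mult_mono[OF l cos_lip]) auto
    finally show "\<bar>dc n\<bar> \<le> d" using AB by simp
    have "ds n = lam2 * (sin A - sin B)" by (simp add: ds_def ss_def A_def B_def right_diff_distrib)
    then have "\<bar>ds n\<bar> = \<bar>lam2\<bar> * \<bar>sin A - sin B\<bar>" by (simp add: abs_mult)
    also have "\<dots> \<le> 1 * \<bar>A - B\<bar>" by (rule mult_mono[OF l sin_lip]) auto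
    finally show "\<bar>ds n\<bar> \<le> d" using AB by simp
  qed
  have uT: "u n True = of_real (dc n) * \<xi> n True - of_real (ds n) * \<xi> n False" for n
    by (simp add: u_def Qg_def dc_def ds_def algebra_simps)
  have uF: "u n False = of_real (ds n) * \<xi> n True + of_real (dc n) * \<xi> n False" for n
    by (simp add: u_def Qg_def dc_def ds_def algebra_simps)
  have pu: "cmod (u n s) \<le> d * (cmod (\<xi> n True) + cmod (\<xi> n False))" for n s
  proof (cases s)
    case True
    have "cmod (u n True) \<le> \<bar>dc n\<bar> * cmod (\<xi> n True) + \<bar>ds n\<bar> * cmod (\<xi> n False)"
      unfolding uT by (rule order_trans[OF norm_triangle_ineq4]) (simp add: norm_mult)
    then have "cmod (u n s) \<le> \<bar>dc n\<bar> * cmod (\<xi> n True) + \<bar>ds n\<bar> * cmod (\<xi> n False)"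
      using True by simp
    also have "\<dots> \<le> d * cmod (\<xi> n True) + d * cmod (\<xi> n False)"
      by (intro add_mono mult_right_mono dcb dsb) auto
    finally show ?thesis by (simp add: algebra_simps)
  next
    case False
    have "cmod (u n False) \<le> \<bar>ds n\<bar> * cmod (\<xi> n True) + \<bar>dc n\<bar> * cmod (\<xi> n False)"
      unfolding uF by (rule order_trans[OF norm_triangle_ineq]) (simp add: norm_mult)
    then have "cmod (u n s) \<le> \<bar>ds n\<bar> * cmod (\<xi> n True) + \<bar>dc n\<bar> * cmod (\<xi> n False)"
      using False by simp
    also have "\<dots> \<le> d * cmod (\<xi> n True) + d * cmod (\<xi> n False)"
      by (intro add_mono mult_right_mono dcb dsb) auto
    finally show ?thesis by (simp add: algebra_simps)
  qed
  have squ: "sq u n \<le> (2 * d)\<^sup>2 * sq \<xi> n" for n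
  proof -
    define x where "x = cmod (\<xi> n True)"
    define y where "y = cmod (\<xi> n False)"
    have xy: "0 \<le> x" "0 \<le> y" by (simp_all add: x_def y_def)
    have a: "(cmod (u n s))\<^sup>2 \<le> (d * (x + y))\<^sup>2" for s
      using pu[of n s] unfolding x_def y_def by (intro power_mono) auto
    have e1: "(x + y)\<^sup>2 = x\<^sup>2 + 2 * (x * y) + y\<^sup>2" "(x - y)\<^sup>2 = x\<^sup>2 - 2 * (x * y) + y\<^sup>2"
      by (simp_all add: power2_eq_square algebra_simps)
    have "0 \<le> (x - y)\<^sup>2" by simp
    then have "0 \<le> x\<^sup>2 - 2 * (x * y) + y\<^sup>2" unfolding e1(2) .
    then have "x\<^sup>2 + 2 * (x * y) + y\<^sup>2 \<le> 2 * (x\<^sup>2 + y\<^sup>2)" by (simp add: algebra_simps)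
    then have b0: "(x + y)\<^sup>2 \<le> 2 * (x\<^sup>2 + y\<^sup>2)" unfolding e1(1) .
    have b: "(d * (x + y))\<^sup>2 \<le> d\<^sup>2 * (2 * (x\<^sup>2 + y\<^sup>2))"
      unfolding power_mult_distrib by (rule mult_left_mono[OF b0]) simp
    have "(cmod (u n True))\<^sup>2 + (cmod (u n False))\<^sup>2 \<le> 4 * d\<^sup>2 * (x\<^sup>2 + y\<^sup>2)"
      using a[of True] a[of False] b by linarith
    then show ?thesis unfolding sq_def x_def y_def by (simp add: power_mult_distrib)
  qed
  have ws: "(\<Sum>n\<in>{-(L+1)..L+1}. sq (Sg lam1 (- cpl lam1) (-1) u) n) \<le> (2 * d)\<^sup>2 * (\<Sum>n\<in>{-(L+1)..L+1}. sq \<xi> n)"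
  proof -
    have "(\<Sum>n\<in>{-(L+1)..L+1}. sq (Sg lam1 (- cpl lam1) (-1) u) n) = (\<Sum>n\<in>{-(L+1)..L+1}. sq u n)"
      by (rule ws_Sg[OF _ _ us]) (use cpl_sq[OF l1] in auto)
    also have "\<dots> \<le> (\<Sum>n\<in>{-(L+1)..L+1}. (2 * d)\<^sup>2 * sq \<xi> n)" by (rule sum_mono) (rule squ)
    finally show ?thesis by (simp add: sum_distrib_left)
  qed
  have Ss: "supp_in (L + 1) (Sg lam1 (- cpl lam1) (-1) u)" by (rule supp_Sg[OF us]) simp
  have "l2norm (Sg lam1 (- cpl lam1) (-1) u) = wn (L + 1) (Sg lam1 (- cpl lam1) (-1) u)" by (rule supp_l2(2)[OF Ss])
  also have "\<dots> \<le> 2 * d * wn (L + 1) \<xi>"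
  proof -
    have "(wn (L + 1) (Sg lam1 (- cpl lam1) (-1) u))\<^sup>2 \<le> (2 * d)\<^sup>2 * (wn (L + 1) \<xi>)\<^sup>2"
      unfolding wn_sq by (rule ws)
    then have "(wn (L + 1) (Sg lam1 (- cpl lam1) (-1) u))\<^sup>2 \<le> (2 * d * wn (L + 1) \<xi>)\<^sup>2"
      by (simp only: power_mult_distrib)
    then show ?thesis by (rule power2_le_imp_le) (use d0 in simp)
  qed
  also have "wn (L + 1) \<xi> = l2norm \<xi>" using supp_l2(2)[OF L] wn_supp[OF L, of "L+1"] by simp
  finally show ?thesis unfolding eq d_def by simp
qed

lemma supp_mono: "supp_in K \<psi> \<Longrightarrow> K \<le> K' \<Longrightarrow> supp_in K' \<psi>"
  unfolding supp_in_def by auto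

lemma APf_limit:
  assumes l1: "lam1 \<in> {0..1}" and l2: "lam2 \<in> {0..1}" and th: "\<And>k. th k \<in> {0..1}"
    and h: "\<And>k. \<exists>\<xi> L. supp_in L \<xi> \<and> \<xi> \<noteq> (\<lambda>n s. 0) \<and>
       l2norm (\<lambda>n s. Wop lam1 lam2 \<Phi> (th k) \<xi> n s - z * \<xi> n s) \<le> (1 / (real k + 1)) * l2norm \<xi>"
  shows "\<exists>\<theta>. APf (Wop lam1 lam2 \<Phi> \<theta>) z"
proof -
  interpret A: lams lam1 lam2 using l1 l2 by unfold_locales
  have "seq_compact {0..1::real}" by (rule compact_imp_seq_compact[OF compact_Icc])
  then obtain l r where lr: "l \<in> {0..1}" "strict_mono r" "(th \<circ> r) \<longlonglongrightarrow> l"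
    using seq_compactE th by metis
  have "APf (Wop lam1 lam2 \<Phi> l) z"
    unfolding APf_def
  proof (intro allI impI)
    fix e :: real assume e0: "0 < e"
    have "0 < e / (8 * pi)" using e0 by simp
    then obtain N1 where N1: "\<And>k. N1 \<le> k \<Longrightarrow> norm ((th \<circ> r) k - l) < e / (8 * pi)"
      using lr(3) unfolding LIMSEQ_iff by blast
    define N2 where "N2 = nat \<lceil>2 / e\<rceil>"
    define k where "k = max N1 N2"
    have tk: "\<bar>th (r k) - l\<bar> < e / (8 * pi)" using N1[of k] by (simp add: k_def)
    have rk: "k \<le> r k" using seq_suble[OF lr(2)] .
    have "2 / e \<le> real N2" unfolding N2_def by linarith
    also have "\<dots> \<le> real k" by (simp add: k_def)
    also have "\<dots> \<le> real (r k)" using rk by simp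
    finally have "2 / e \<le> real (r k)" .
    then have "2 \<le> e * (real (r k) + 1)" using e0 by (simp add: field_simps)
    then have ek: "1 / (real (r k) + 1) \<le> e / 2" using e0 by (simp add: field_simps)
    obtain \<xi> L where \<xi>: "supp_in L \<xi>" "\<xi> \<noteq> (\<lambda>n s. 0)"
      "l2norm (\<lambda>n s. Wop lam1 lam2 \<Phi> (th (r k)) \<xi> n s - z * \<xi> n s) \<le> (1 / (real (r k) + 1)) * l2norm \<xi>"
      using h[of "r k"] by blast
    define t where "t = th (r k)"
    have xl: "\<xi> \<in> l2" by (rule supp_l2(1)[OF \<xi>(1)])
    have w1: "Wop lam1 lam2 \<Phi> t \<xi> \<in> l2" by (rule supp_l2(1)[OF A.W_supp[OF \<xi>(1)]])
    have w2: "Wop lam1 lam2 \<Phi> l \<xi> \<in> l2" by (rule supp_l2(1)[OF A.W_supp[OF \<xi>(1)]])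
    define f1 where "f1 = (\<lambda>n s. Wop lam1 lam2 \<Phi> t \<xi> n s - z * \<xi> n s)"
    define f2 where "f2 = (\<lambda>n s. Wop lam1 lam2 \<Phi> l \<xi> n s - Wop lam1 lam2 \<Phi> t \<xi> n s)"
    have f1l: "f1 \<in> l2" unfolding f1_def by (rule l2_diff(1)[OF w1 l2_scale(1)[OF xl]])
    have f2l: "f2 \<in> l2" unfolding f2_def by (rule l2_diff(1)[OF w2 w1])
    have sum: "(\<lambda>n s. f1 n s + f2 n s) = (\<lambda>n s. Wop lam1 lam2 \<Phi> l \<xi> n s - z * \<xi> n s)"
      by (simp add: f1_def f2_def)
    have "l2norm (\<lambda>n s. Wop lam1 lam2 \<Phi> l \<xi> n s - z * \<xi> n s) \<le> l2norm f1 + l2norm f2"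
      using l2_add(2)[OF f1l f2l] unfolding sum .
    also have "l2norm f1 \<le> (e / 2) * l2norm \<xi>"
      using \<xi>(3) ek mult_right_mono[OF ek l2norm_nonneg[of \<xi>]] unfolding f1_def t_def by linarith
    also have "l2norm f2 \<le> 4 * pi * \<bar>l - t\<bar> * l2norm \<xi>"
      unfolding f2_def by (rule W_lip[OF l1 l2 \<xi>(1)])
    also have "4 * pi * \<bar>l - t\<bar> * l2norm \<xi> \<le> 4 * pi * (e / (8 * pi)) * l2norm \<xi>"
      using tk unfolding t_def by (intro mult_right_mono mult_left_mono) auto
    finally have "l2norm (\<lambda>n s. Wop lam1 lam2 \<Phi> l \<xi> n s - z * \<xi> n s) \<le> e * l2norm \<xi>"
      by (simp add: field_simps)
    then show "\<exists>\<psi> K. supp_in K \<psi> \<and> \<psi> \<noteq> (\<lambda>n s. 0) \<and>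
             l2norm (\<lambda>n s. Wop lam1 lam2 \<Phi> l \<psi> n s - z * \<psi> n s) \<le> e * l2norm \<psi>"
      using \<xi>(1,2) by blast
  qed
  then show ?thesis by blast
qed

lemma incl:
  assumes l1: "lam1 \<in> {0..1}" and l2: "lam2 \<in> {0..1}"
  shows "Sigma_UAMO lam1 lam2 \<Phi> \<subseteq> Sigma_UAMO lam2 lam1 \<Phi>"
proof
  fix z assume "z \<in> Sigma_UAMO lam1 lam2 \<Phi>"
  then obtain \<theta> where z: "z \<in> op_spectrum (UAMO lam1 lam2 \<Phi> \<theta>)" unfolding Sigma_UAMO_def by blast
  interpret X: lamsW lam1 lam2 \<Phi> \<theta> using l1 l2 by unfold_locales
  have z': "z \<in> op_spectrum (Wop lam1 lam2 \<Phi> \<theta>)" using z by (simp add: UAMO_Wop)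
  have ap: "APf (Wop lam1 lam2 \<Phi> \<theta>) z" by (rule X.spec_APf[OF z'])
  have z1: "cmod z = 1" by (rule X.spec_unit[OF z'])
  have ex: "\<forall>k::nat. \<exists>t. t \<in> {0..1} \<and> (\<exists>\<xi> L. supp_in L \<xi> \<and> \<xi> \<noteq> (\<lambda>n s. 0) \<and>
       l2norm (\<lambda>n s. Wop lam2 lam1 \<Phi> t \<xi> n s - z * \<xi> n s) \<le> (1 / (real k + 1)) * l2norm \<xi>)"
  proof
    fix k :: nat
    define e where "e = (1 / (real k + 1)) / 2"
    have e0: "0 < e" unfolding e_def by (simp add: add_pos_nonneg)
    obtain \<psi> K where \<psi>: "supp_in K \<psi>" "\<psi> \<noteq> (\<lambda>n s. 0)"
      "l2norm (\<lambda>n s. Wop lam1 lam2 \<Phi> \<theta> \<psi> n s - z * \<psi> n s) \<le> e * l2norm \<psi>"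
      using ap e0 unfolding APf_def by blast
    have K': "supp_in (max K 0) \<psi>" by (rule supp_mono[OF \<psi>(1)]) simp
    have pl: "\<psi> \<in> l2" by (rule supp_l2(1)[OF \<psi>(1)])
    have P0: "0 < l2norm \<psi>" using l2norm_eq0[OF pl] \<psi>(2) by force
    obtain t \<xi> L where t: "t \<in> {0..1}" "supp_in L \<xi>" "\<xi> \<noteq> (\<lambda>n s. 0)"
      "l2norm (\<lambda>n s. Wop lam2 lam1 \<Phi> t \<xi> n s - z * \<xi> n s) \<le> 2 * e * l2norm \<xi>"
      using transfer_ap[OF l1 l2 z1 e0 K' _ P0 \<psi>(3)] by auto
    have g: "\<And>x::real. 2 * (x / 2) = x" by simp
    have "2 * e = 1 / (real k + 1)" unfolding e_def by (rule g)
    show "\<exists>t. t \<in> {0..1} \<and> (\<exists>\<xi> L. supp_in L \<xi> \<and> \<xi> \<noteq> (\<lambda>n s. 0) \<and>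
       l2norm (\<lambda>n s. Wop lam2 lam1 \<Phi> t \<xi> n s - z * \<xi> n s) \<le> (1 / (real k + 1)) * l2norm \<xi>)"
    proof -
      have b: "l2norm (\<lambda>n s. Wop lam2 lam1 \<Phi> t \<xi> n s - z * \<xi> n s) \<le> (1 / (real k + 1)) * l2norm \<xi>"
        using t(4) \<open>2 * e = 1 / (real k + 1)\<close> by simp
      show ?thesis using t(1,2,3) b by blast
    qed
  qed
  obtain th where th: "\<And>k. th k \<in> {0..1}" and
    h: "\<And>k. \<exists>\<xi> L. supp_in L \<xi> \<and> \<xi> \<noteq> (\<lambda>n s. 0) \<and>
       l2norm (\<lambda>n s. Wop lam2 lam1 \<Phi> (th k) \<xi> n s - z * \<xi> n s) \<le> (1 / (real k + 1)) * l2norm \<xi>"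
    using choice[OF ex] by blast
  obtain \<theta>s where aps: "APf (Wop lam2 lam1 \<Phi> \<theta>s) z"
    using APf_limit[OF l2 l1 th h] by blast
  interpret Y: lamsW lam2 lam1 \<Phi> \<theta>s using l1 l2 by unfold_locales
  have "z \<in> op_spectrum (Wop lam2 lam1 \<Phi> \<theta>s)" by (rule Y.APf_spec[OF aps])
  then show "z \<in> Sigma_UAMO lam2 lam1 \<Phi>" unfolding Sigma_UAMO_def by (auto simp: UAMO_Wop)
qed

theorem corollary2p4:
  fixes lam1 lam2 \<Phi> :: real
  assumes "lam1 \<in> {0..1}" and "lam2 \<in> {0..1}" and "\<Phi> \<notin> \<rat>"
  shows "Sigma_UAMO lam1 lam2 \<Phi> = Sigma_UAMO lam2 lam1 \<Phi>"
  using incl[OF assms(1,2)] incl[OF assms(2,1)] by (rule equalityI)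

end
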